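(* Consider the composite SBMD method described in the context with uniform probabilities $p_1=\dots=p_b=1/b$, constant stepsizes \[ \gamma_k=\gamma=\min\left\{\frac1{2\bar L},\frac{\tilde D}{\sigma}\sqrt{\frac bN}\right\}\quad(k\ge1),\qquad \bar L:=\max_iL_i, \] for some $\tilde D>0$, and weights $\theta_1=0$, $\theta_{k+1}=b\gamma_k-(b-1)\gamma_{k+1}$ for $k\ge1$. Then \[ \mathbb{E}[\phi(\bar x_N)-\phi(x^* )]\le\frac{(b-1)[\phi(x_1)-\phi(x^* )]}{N}+\frac{2b\bar L\sum_{i=1}^bV_i(x_1^{(i)},x^{*(i)})}{N}+\frac{\sigma\sqrt b}{\sqrt N}\left[\frac{\sum_{i=1}^bV_i(x_1^{(i)},x^{*(i)})}{\tilde D}+\tilde D\right], \] where $x^*$ is an optimal solution of $\min_{x\in X}\phi(x)$ and $\sigma=(\sum_{i=1}^b\sigma_i^2)^{1/2}$.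
   Context: Block structure: for $i=1,\dots,b$, $X_i\subseteq\mathbb{R}^{n_i}$ is a nonempty closed convex set, $X=X_1\times\cdots\times X_b\subseteq\mathbb{R}^n$. Each $\mathbb{R}^{n_i}$ carries a norm $\|\cdot\|_i$ with dual $\|\cdot\|_{i,*}$; $U_i\in\mathbb{R}^{n\times n_i}$ satisfy $(U_1,\dots,U_b)=I_n$, $x^{(i)}:=U_i^Tx$. Problem: $\phi(x)=f(x)+\chi(x)$ on $X$, where $f(x)=\mathbb{E}[F(x,\xi)]$ is convex and differentiable with gradient $g$, $g_i:=U_i^Tg$, and $\|g_i(x+U_i\rho)-g_i(x)\|_{i,*}\le L_i\|\rho\|_i$ whenever $x,x+U_i\rho\in X$; $\chi(x)=\sum_{i=1}^b\chi_i(x^{(i)})$ with each $\chi_i:\mathbb{R}^{n_i}\to\mathbb{R}$ closed convex. A stochastic oracle returns $G(x,\xi)$ with $\mathbb{E}[G(x,\xi)]=g(x)$ and $\mathbb{E}[\|G_i(x,\xi)-g_i(x)\|_{i,*}^2]\le\sigma_i^2$ for all $x\in X$ ($G_i=U_i^TG$); assume $\sigma>0$. The problem has an optimal solution $x^*$. Prox setup: $\omega_i:X_i\to\mathbb{R}$ continuously differentiable, 1-strongly convex w.r.t. $\|\cdot\|_i$; $V_i(z,x)=\omega_i(x)-\omega_i(z)-\langle\nabla\omega_i(z),x-z\rangle$; $\mathcal P_i(x,y,\gamma)=\arg\min_{z\in X_i}\{\langle y,z-x\rangle+\frac1\gamma V_i(x,z)+\chi_i(z)\}$. Composite SBMD method: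 given $x_1\in X$; $\xi_1,\xi_2,\dots$ i.i.d. copies of $\xi$, $i_1,i_2,\dots$ i.i.d. with $\mathrm{Prob}(i_k=i)=p_i$, independent of the $\xi_k$. For $k=1,\dots,N$: $x_{k+1}^{(i_k)}=\mathcal P_{i_k}(x_k^{(i_k)},G_{i_k}(x_k,\xi_k),\gamma_k)$, $x_{k+1}^{(i)}=x_k^{(i)}$ for $i\ne i_k$. Output $\bar x_N=\left(\sum_{k=2}^{N+1}\theta_k\right)^{-1}\sum_{k=2}^{N+1}\theta_kx_k$. Expectations w.r.t. $\{i_k\},\{\xi_k\}$. *)

theory Defs
  imports "HOL-Probability.Probability"
begin

text \<open>Block structure on R^n = real^'n: the coordinates are partitioned into blocks
  via blk :: 'n => nat (block labels in 1..b).  Block i vectors x^(i) = U_i^T x are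
  represented as the vectors of real^'n supported on the coordinates of block i;
  U_i x^(i) is then the same vector.\<close>

definition blkspace :: "('n::finite \<Rightarrow> nat) \<Rightarrow> nat \<Rightarrow> (real^'n) set" where
  "blkspace blk i = {u. \<forall>j. blk j \<noteq> i \<longrightarrow> u $ j = 0}"

definition blkproj :: "('n::finite \<Rightarrow> nat) \<Rightarrow> nat \<Rightarrow> real^'n \<Rightarrow> real^'n" where
  "blkproj blk i x = (\<chi> j. if blk j = i then x $ j else 0)"

definition norm_on :: "'a::real_vector set \<Rightarrow> ('a \<Rightarrow> real) \<Rightarrow> bool" where
  "norm_on E N \<longleftrightarrow>
     (\<forall>u\<in>E. 0 \<le> N u \<and> (N u = 0 \<longleftrightarrow> u = 0)) \<and>
     (\<forall>u\<in>E. \<forall>c. N (c *\<^sub>R u) = \<bar>c\<bar> * N u) \<and>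
     (\<forall>u\<in>E. \<forall>v\<in>E. N (u + v) \<le> N u + N v)"

definition dual_norm :: "'a::real_inner set \<Rightarrow> ('a \<Rightarrow> real) \<Rightarrow> 'a \<Rightarrow> real" where
  "dual_norm E N y = Sup {y \<bullet> z | z. z \<in> E \<and> N z \<le> 1}"

definition strongly_convex_wrt :: "'a::real_vector set \<Rightarrow> ('a \<Rightarrow> real) \<Rightarrow> ('a \<Rightarrow> real) \<Rightarrow> bool" where
  "strongly_convex_wrt S N w \<longleftrightarrow>
     (\<forall>x\<in>S. \<forall>z\<in>S. \<forall>t::real. 0 \<le> t \<and> t \<le> 1 \<longrightarrow>
        w (t *\<^sub>R x + (1 - t) *\<^sub>R z) \<le> t * w x + (1 - t) * w z - t * (1 - t) / 2 * (N (x - z))^2)"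

definition bregman :: "('a::real_inner \<Rightarrow> real) \<Rightarrow> ('a \<Rightarrow> 'a) \<Rightarrow> 'a \<Rightarrow> 'a \<Rightarrow> real" where
  "bregman w gw z x = w x - w z - gw z \<bullet> (x - z)"

definition prox :: "'a::real_inner set \<Rightarrow> ('a \<Rightarrow> real) \<Rightarrow> ('a \<Rightarrow> 'a) \<Rightarrow> ('a \<Rightarrow> real)
                     \<Rightarrow> 'a \<Rightarrow> 'a \<Rightarrow> real \<Rightarrow> 'a" where
  "prox S w gw chi x y gm =
     (SOME z. z \<in> S \<and> (\<forall>u\<in>S. y \<bullet> (z - x) + bregman w gw x z / gm + chi z
                              \<le> y \<bullet> (u - x) + bregman w gw x u / gm + chi u))"

definition sbmd_step ::
  "('n::finite \<Rightarrow> nat) \<Rightarrow> (nat \<Rightarrow> (real^'n) set) \<Rightarrow> (nat \<Rightarrow> real^'n \<Rightarrow> real)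
   \<Rightarrow> (nat \<Rightarrow> real^'n \<Rightarrow> real^'n) \<Rightarrow> (nat \<Rightarrow> real^'n \<Rightarrow> real)
   \<Rightarrow> (real^'n \<Rightarrow> 'e \<Rightarrow> real^'n) \<Rightarrow> real \<Rightarrow> real^'n \<Rightarrow> nat \<times> 'e \<Rightarrow> real^'n" where
  "sbmd_step blk Xb w gw chi G gm x ie =
     (case ie of (i, e) \<Rightarrow>
        x - blkproj blk i x
          + prox (Xb i) (w i) (gw i) (chi i) (blkproj blk i x) (blkproj blk i (G x e)) gm)"

text \<open>Iterates: sbmd_x ... om k is x_k for k >= 1, where om k = (i_k, xi_k).\<close>
fun sbmd_x ::
  "('n::finite \<Rightarrow> nat) \<Rightarrow> (nat \<Rightarrow> (real^'n) set) \<Rightarrow> (nat \<Rightarrow> real^'n \<Rightarrow> real)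
   \<Rightarrow> (nat \<Rightarrow> real^'n \<Rightarrow> real^'n) \<Rightarrow> (nat \<Rightarrow> real^'n \<Rightarrow> real)
   \<Rightarrow> (real^'n \<Rightarrow> 'e \<Rightarrow> real^'n) \<Rightarrow> (nat \<Rightarrow> real) \<Rightarrow> real^'n
   \<Rightarrow> (nat \<Rightarrow> nat \<times> 'e) \<Rightarrow> nat \<Rightarrow> real^'n" where
  "sbmd_x blk Xb w gw chi G gam x1 om 0 = x1"
| "sbmd_x blk Xb w gw chi G gam x1 om (Suc 0) = x1"
| "sbmd_x blk Xb w gw chi G gam x1 om (Suc (Suc k)) =
     sbmd_step blk Xb w gw chi G (gam (Suc k)) (sbmd_x blk Xb w gw chi G gam x1 om (Suc k)) (om (Suc k))"

definition sbmd_avg :: "(nat \<Rightarrow> real) \<Rightarrow> (nat \<Rightarrow> 'a::real_vector) \<Rightarrow> nat \<Rightarrow> 'a" where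
  "sbmd_avg \<theta> xs N = inverse (\<Sum>k=2..N+1. \<theta> k) *\<^sub>R (\<Sum>k=2..N+1. \<theta> k *\<^sub>R xs k)"

end

theory Submission
  imports Defs
begin


lemma blkproj_nth: "blkproj blk i x $ j = (if blk j = i then x $ j else 0)"
  by (simp add: blkproj_def)

lemma blkproj_in: "blkproj blk i x \<in> blkspace blk i"
  by (simp add: blkspace_def blkproj_def)

lemma blkproj_id: "u \<in> blkspace blk i \<Longrightarrow> blkproj blk i u = u"
  by (auto simp: blkspace_def blkproj_def vec_eq_iff)

lemma blkproj_other: "u \<in> blkspace blk i \<Longrightarrow> k \<noteq> i \<Longrightarrow> blkproj blk k u = 0"
  by (auto simp: blkspace_def blkproj_def vec_eq_iff)

lemma linear_blkproj: "linear (blkproj blk i)"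
  by (rule linearI) (auto simp: blkproj_def vec_eq_iff)

lemma blkproj_add: "blkproj blk i (x + y) = blkproj blk i x + blkproj blk i y"
  by (auto simp: blkproj_def vec_eq_iff)
lemma blkproj_diff: "blkproj blk i (x - y) = blkproj blk i x - blkproj blk i y"
  by (auto simp: blkproj_def vec_eq_iff)
lemma blkproj_scale: "blkproj blk i (c *\<^sub>R x) = c *\<^sub>R blkproj blk i x"
  by (auto simp: blkproj_def vec_eq_iff)

lemma subspace_blkspace: "subspace (blkspace blk i)"
  by (auto simp: subspace_def blkspace_def)

lemma blkspace_add: "u \<in> blkspace blk i \<Longrightarrow> v \<in> blkspace blk i \<Longrightarrow> u + v \<in> blkspace blk i"
  by (auto simp: blkspace_def)
lemma blkspace_diff: "u \<in> blkspace blk i \<Longrightarrow> v \<in> blkspace blk i \<Longrightarrow> u - v \<in> blkspace blk i"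
  by (auto simp: blkspace_def)
lemma blkspace_scale: "u \<in> blkspace blk i \<Longrightarrow> c *\<^sub>R u \<in> blkspace blk i"
  by (auto simp: blkspace_def)
lemma blkspace_zero: "0 \<in> blkspace blk i"
  by (auto simp: blkspace_def)

lemma continuous_blkproj: "continuous_on A (blkproj blk i)"
  by (intro linear_continuous_on linear_conv_bounded_linear[THEN iffD1] linear_blkproj)

lemma continuous_on_blkproj[continuous_intros]:
  "continuous_on A h \<Longrightarrow> continuous_on A (\<lambda>x. blkproj blk i (h x))"
  using continuous_on_compose2[OF continuous_blkproj[of UNIV] _ subset_UNIV] by blast

lemma closed_blkspace: "closed (blkspace blk i)"
proof -
  have "blkspace blk i = {u. blkproj blk i u - u = 0}"
    by (auto simp: blkspace_def blkproj_def vec_eq_iff)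
  moreover have "closed {u. blkproj blk i u - u = 0}"
    by (intro closed_Collect_eq continuous_on_diff continuous_blkproj continuous_on_id continuous_on_const)
  ultimately show ?thesis by simp
qed

lemma blkproj_inner: "blkproj blk i v \<bullet> u = v \<bullet> u" if "u \<in> blkspace blk i"
  using that by (auto simp: inner_vec_def blkproj_def blkspace_def intro!: sum.cong)

lemma inner_blk_sum:
  assumes "\<forall>j. blk j \<in> {1..b}"
  shows "v \<bullet> u = (\<Sum>i=1..b. blkproj blk i v \<bullet> blkproj blk i u)"
proof -
  have "(\<Sum>i=1..b. blkproj blk i v \<bullet> blkproj blk i u)
      = (\<Sum>i=1..b. \<Sum>j\<in>UNIV. (if blk j = i then v $ j * u $ j else 0))"
    by (auto simp: inner_vec_def blkproj_def intro!: sum.cong)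
  also have "\<dots> = (\<Sum>j\<in>UNIV. \<Sum>i=1..b. (if blk j = i then v $ j * u $ j else 0))"
    by (rule sum.swap)
  also have "\<dots> = (\<Sum>j\<in>UNIV. v $ j * u $ j)"
    using assms by (auto intro!: sum.cong simp: sum.delta)
  finally show ?thesis by (simp add: inner_vec_def)
qed

lemma dq_limit:
  fixes F :: "'a::real_inner \<Rightarrow> real"
  assumes der: "(F has_derivative (\<lambda>h. G \<bullet> h)) (at z within T)"
    and T: "convex T" "z \<in> T" "x \<in> T"
  shows "((\<lambda>t. (F (z + t *\<^sub>R (x - z)) - F z) / t) \<longlongrightarrow> G \<bullet> (x - z)) (at_right 0)"
proof -
  let ?p = "\<lambda>t::real. z + t *\<^sub>R (x - z)"
  have p: "(?p has_derivative (\<lambda>t. t *\<^sub>R (x - z))) (at 0 within {0..1})"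
    by (auto intro!: derivative_eq_intros)
  have img: "?p ` {0..1} \<subseteq> T"
  proof
    fix y assume "y \<in> ?p ` {0..1}"
    then obtain t where t: "t \<in> {0..1}" "y = ?p t" by auto
    have "y = (1 - t) *\<^sub>R z + t *\<^sub>R x" using t by (simp add: algebra_simps)
    then show "y \<in> T" using T t by (auto intro: convexD_alt)
  qed
  have der': "(F has_derivative (\<lambda>h. G \<bullet> h)) (at (?p 0) within ?p ` {0..1})"
    using has_derivative_subset[OF der img] by simp
  have "((F \<circ> ?p) has_derivative ((\<lambda>h. G \<bullet> h) \<circ> (\<lambda>t. t *\<^sub>R (x - z)))) (at 0 within {0..1})"
    by (rule diff_chain_within[OF p der'])
  then have "((F \<circ> ?p) has_field_derivative (G \<bullet> (x - z))) (at 0 within {0..1})"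
    by (simp add: has_field_derivative_def o_def mult.commute inner_scaleR_right mult_commute_abs)
  then have "((\<lambda>y. ((F \<circ> ?p) y - (F \<circ> ?p) 0) / (y - 0)) \<longlongrightarrow> G \<bullet> (x - z)) (at 0 within {0..1})"
    by (simp add: has_field_derivative_iff)
  then show ?thesis by (simp add: at_within_Icc_at_right)
qed

lemma convex_blkspace: "convex (blkspace blk i)"
  by (rule subspace_imp_convex[OF subspace_blkspace])

lemma convex_on_blk_continuous:
  assumes "convex_on (blkspace blk i) g"
  shows "continuous_on (blkspace blk i) g"
proof -
  have "convex_on UNIV (\<lambda>x. g (blkproj blk i x))"
  proof (rule convex_onI)
    fix t :: real and x y :: "real^'a" assume t: "0 < t" "t < 1"
    have "g (blkproj blk i ((1 - t) *\<^sub>R x + t *\<^sub>R y))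
        = g ((1 - t) *\<^sub>R blkproj blk i x + t *\<^sub>R blkproj blk i y)"
      by (simp add: blkproj_add blkproj_scale)
    also have "\<dots> \<le> (1 - t) * g (blkproj blk i x) + t * g (blkproj blk i y)"
      using t by (intro convex_onD[OF assms]) (auto simp: blkproj_in)
    finally show "g (blkproj blk i ((1 - t) *\<^sub>R x + t *\<^sub>R y))
        \<le> (1 - t) * g (blkproj blk i x) + t * g (blkproj blk i y)" .
  qed simp
  then have "continuous_on UNIV (\<lambda>x. g (blkproj blk i x))"
    by (intro convex_on_continuous) auto
  then have "continuous_on (blkspace blk i) (\<lambda>x. g (blkproj blk i x))"
    by (rule continuous_on_subset) auto
  then show ?thesis
    by (rule continuous_on_cong[THEN iffD1, rotated 2]) (auto simp: blkproj_id)
qed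

lemma norm_on_zero: "norm_on E N \<Longrightarrow> 0 \<in> E \<Longrightarrow> N 0 = 0"
  by (auto simp: norm_on_def)
lemma norm_on_scale: "norm_on E N \<Longrightarrow> u \<in> E \<Longrightarrow> N (c *\<^sub>R u) = \<bar>c\<bar> * N u"
  by (auto simp: norm_on_def)
lemma norm_on_triangle: "norm_on E N \<Longrightarrow> u \<in> E \<Longrightarrow> v \<in> E \<Longrightarrow> N (u + v) \<le> N u + N v"
  by (auto simp: norm_on_def)
lemma norm_on_nonneg: "norm_on E N \<Longrightarrow> u \<in> E \<Longrightarrow> 0 \<le> N u"
  by (auto simp: norm_on_def)
lemma norm_on_pos: "norm_on E N \<Longrightarrow> u \<in> E \<Longrightarrow> u \<noteq> 0 \<Longrightarrow> 0 < N u"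
  unfolding norm_on_def by (metis order_le_less)
lemma norm_on_minus: "norm_on E N \<Longrightarrow> u \<in> E \<Longrightarrow> N (- u) = N u"
  using norm_on_scale[of E N u "-1"] by simp

lemma nrm_convex:
  assumes "norm_on (blkspace blk i) N"
  shows "convex_on (blkspace blk i) N"
proof (rule convex_onI)
  fix t :: real and x y assume t: "0 < t" "t < 1" and x: "x \<in> blkspace blk i" and y: "y \<in> blkspace blk i"
  have "N ((1 - t) *\<^sub>R x + t *\<^sub>R y) \<le> N ((1 - t) *\<^sub>R x) + N (t *\<^sub>R y)"
    by (intro norm_on_triangle[OF assms] blkspace_scale x y)
  also have "\<dots> = (1 - t) * N x + t * N y"
    using t by (simp add: norm_on_scale[OF assms x] norm_on_scale[OF assms y])
  finally show "N ((1 - t) *\<^sub>R x + t *\<^sub>R y) \<le> (1 - t) * N x + t * N y" .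
qed (rule convex_blkspace)

lemma nrm_lower:
  assumes N: "norm_on (blkspace blk i) N"
  shows "\<exists>c>0. \<forall>u\<in>blkspace blk i. c * norm u \<le> N u"
proof (cases "sphere 0 1 \<inter> blkspace blk i = {}")
  case True
  have "\<forall>u\<in>blkspace blk i. 1 * norm u \<le> N u"
  proof
    fix u assume u: "u \<in> blkspace blk i"
    show "1 * norm u \<le> N u"
    proof (cases "u = 0")
      case True then show ?thesis using norm_on_zero[OF N blkspace_zero] by simp
    next
      case False
      then have "inverse (norm u) *\<^sub>R u \<in> sphere 0 1 \<inter> blkspace blk i"
        using u by (auto intro: blkspace_scale)
      with True show ?thesis by blast
    qed
  qed
  then show ?thesis by (intro exI[of _ 1]) auto
next
  case False
  have cpt: "compact (sphere 0 1 \<inter> blkspace blk i)"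
    by (intro compact_Int_closed compact_sphere closed_blkspace)
  have cont: "continuous_on (sphere 0 1 \<inter> blkspace blk i) N"
    by (rule continuous_on_subset[OF convex_on_blk_continuous[OF nrm_convex[OF N]]]) auto
  obtain u0 where u0: "u0 \<in> sphere 0 1 \<inter> blkspace blk i"
    and min: "\<forall>y\<in>sphere 0 1 \<inter> blkspace blk i. N u0 \<le> N y"
    using continuous_attains_inf[OF cpt False cont] by blast
  have c0: "0 < N u0" using u0 by (intro norm_on_pos[OF N]) auto
  have "\<forall>u\<in>blkspace blk i. N u0 * norm u \<le> N u"
  proof
    fix u assume u: "u \<in> blkspace blk i"
    show "N u0 * norm u \<le> N u"
    proof (cases "u = 0")
      case True then show ?thesis using norm_on_zero[OF N blkspace_zero] by simp
    next
      case False
      then have "inverse (norm u) *\<^sub>R u \<in> sphere 0 1 \<inter> blkspace blk i"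
        using u by (auto intro: blkspace_scale)
      then have "N u0 \<le> N (inverse (norm u) *\<^sub>R u)" using min by blast
      also have "\<dots> = inverse (norm u) * N u" using norm_on_scale[OF N u] by simp
      finally show ?thesis using False by (simp add: field_simps)
    qed
  qed
  then show ?thesis using c0 by blast
qed

locale nrmblk =
  fixes blk :: "'n::finite \<Rightarrow> nat" and i :: nat and N :: "real^'n \<Rightarrow> real"
  assumes N: "norm_on (blkspace blk i) N"
begin

definition "cN = (SOME c. c > 0 \<and> (\<forall>u\<in>blkspace blk i. c * norm u \<le> N u))"

lemma cN: "cN > 0" "\<And>u. u \<in> blkspace blk i \<Longrightarrow> cN * norm u \<le> N u"
  using someI_ex[OF nrm_lower[OF N]] unfolding cN_def[symmetric] by auto

abbreviation "dn \<equiv> dual_norm (blkspace blk i) N"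

lemma dn_set_bdd: "bdd_above {v \<bullet> z |z. z \<in> blkspace blk i \<and> N z \<le> 1}"
proof (rule bdd_aboveI)
  fix y assume "y \<in> {v \<bullet> z |z. z \<in> blkspace blk i \<and> N z \<le> 1}"
  then obtain z where z: "y = v \<bullet> z" "z \<in> blkspace blk i" "N z \<le> 1" by auto
  have "cN * norm z \<le> 1" using cN(2)[OF z(2)] z(3) by linarith
  then have nz: "norm z \<le> 1 / cN" using cN(1) by (simp add: field_simps)
  have "y \<le> norm v * norm z" using z(1) norm_cauchy_schwarz by simp
  also have "\<dots> \<le> norm v * (1 / cN)" using nz by (intro mult_left_mono) auto
  finally show "y \<le> norm v / cN" by simp
qed

lemma dn_set_ne: "{v \<bullet> z |z. z \<in> blkspace blk i \<and> N z \<le> 1} \<noteq> {}"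
  using blkspace_zero[of blk i] norm_on_zero[OF N blkspace_zero] by auto

lemma dn_ge: "z \<in> blkspace blk i \<Longrightarrow> N z \<le> 1 \<Longrightarrow> v \<bullet> z \<le> dn v"
  unfolding dual_norm_def by (rule cSup_upper[OF _ dn_set_bdd]) auto

lemma dn_nonneg: "0 \<le> dn v"
  using dn_ge[OF blkspace_zero, of v] norm_on_zero[OF N blkspace_zero] by simp

lemma dn_le: assumes d: "d \<in> blkspace blk i" shows "v \<bullet> d \<le> dn v * N d"
proof (cases "d = 0")
  case True then show ?thesis using norm_on_zero[OF N blkspace_zero] by simp
next
  case False
  have pos: "N d > 0" using norm_on_pos[OF N d False] .
  have "inverse (N d) *\<^sub>R d \<in> blkspace blk i" using d by (rule blkspace_scale)
  moreover have "N (inverse (N d) *\<^sub>R d) \<le> 1" using norm_on_scale[OF N d] pos by simp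
  ultimately have "v \<bullet> (inverse (N d) *\<^sub>R d) \<le> dn v" by (rule dn_ge)
  then show ?thesis using pos by (simp add: field_simps)
qed

lemma dn_le_abs: assumes d: "d \<in> blkspace blk i" shows "\<bar>v \<bullet> d\<bar> \<le> dn v * N d"
proof -
  have "v \<bullet> (- d) \<le> dn v * N (- d)" by (rule dn_le) (simp add: d blkspace_scale[of d blk i "-1", simplified])
  then show ?thesis using dn_le[OF d, of v] norm_on_minus[OF N d] by auto
qed

lemma dn_convex: "convex_on UNIV dn"
proof (rule convex_onI)
  fix t :: real and x y :: "real^'n" assume t: "0 < t" "t < 1"
  show "dn ((1 - t) *\<^sub>R x + t *\<^sub>R y) \<le> (1 - t) * dn x + t * dn y"
    unfolding dual_norm_def[of _ _ "(1 - t) *\<^sub>R x + t *\<^sub>R y"]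
  proof (rule cSup_least[OF dn_set_ne])
    fix a assume "a \<in> {((1 - t) *\<^sub>R x + t *\<^sub>R y) \<bullet> z |z. z \<in> blkspace blk i \<and> N z \<le> 1}"
    then obtain z where z: "a = ((1 - t) *\<^sub>R x + t *\<^sub>R y) \<bullet> z" "z \<in> blkspace blk i" "N z \<le> 1" by auto
    have "a = (1 - t) * (x \<bullet> z) + t * (y \<bullet> z)" using z(1) by (simp add: inner_add_left)
    also have "\<dots> \<le> (1 - t) * dn x + t * dn y"
      using t dn_ge[OF z(2,3), of x] dn_ge[OF z(2,3), of y]
      by (intro add_mono mult_left_mono) auto
    finally show "a \<le> (1 - t) * dn x + t * dn y" .
  qed
qed simp

lemma dn_continuous: "continuous_on UNIV dn"
  by (rule convex_on_continuous[OF _ dn_convex]) simp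

lemma dn_measurable: "dn \<in> borel_measurable borel"
  using dn_continuous by (rule borel_measurable_continuous_onI)

end

locale proxblk = nrmblk blk i N for blk :: "'n::finite \<Rightarrow> nat" and i N +
  fixes S :: "(real^'n) set" and w :: "real^'n \<Rightarrow> real" and gw chi
  assumes S: "S \<noteq> {}" "closed S" "convex S" "S \<subseteq> blkspace blk i"
  and w_diff: "\<forall>z\<in>S. (w has_derivative (\<lambda>h. gw z \<bullet> h)) (at z within S)"
  and w_C1: "continuous_on S gw"
  and w_sc: "strongly_convex_wrt S N w"
  and chi: "convex_on (blkspace blk i) chi"
begin

lemma S_blk: "u \<in> S \<Longrightarrow> u \<in> blkspace blk i" using S(4) by auto

lemma w_cont: "continuous_on S w"
  unfolding continuous_on_eq_continuous_within
  using w_diff has_derivative_continuous by blast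

lemma chi_cont: "continuous_on S chi"
  by (rule continuous_on_subset[OF convex_on_blk_continuous[OF chi] S(4)])

lemma sc_ineq:
  assumes "x \<in> S" "z \<in> S" "0 \<le> t" "t \<le> 1"
  shows "w (z + t *\<^sub>R (x - z)) \<le> t * w x + (1 - t) * w z - t * (1 - t) / 2 * (N (x - z))\<^sup>2"
proof -
  have "z + t *\<^sub>R (x - z) = t *\<^sub>R x + (1 - t) *\<^sub>R z" by (simp add: algebra_simps)
  then show ?thesis using w_sc assms unfolding strongly_convex_wrt_def by metis
qed

lemma bregman_lb:
  assumes z: "z \<in> S" and x: "x \<in> S"
  shows "(N (x - z))\<^sup>2 / 2 \<le> bregman w gw z x"
proof -
  have lim1: "((\<lambda>t. (w (z + t *\<^sub>R (x - z)) - w z) / t) \<longlongrightarrow> gw z \<bullet> (x - z)) (at_right 0)"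
    using w_diff z x S(3) by (intro dq_limit) auto
  have lim2: "((\<lambda>t::real. w x - w z - (1 - t) / 2 * (N (x - z))\<^sup>2) \<longlongrightarrow> w x - w z - (1 - 0) / 2 * (N (x - z))\<^sup>2) (at_right 0)"
    by (intro tendsto_intros) auto
  have ev: "eventually (\<lambda>t. (w (z + t *\<^sub>R (x - z)) - w z) / t \<le> w x - w z - (1 - t) / 2 * (N (x - z))\<^sup>2) (at_right 0)"
  proof -
    have "eventually (\<lambda>t::real. t \<in> {0<..<1}) (at_right 0)"
      by (intro eventually_at_right_real) auto
    then show ?thesis
    proof eventually_elim
      case (elim t)
      then have t: "0 < t" "t < 1" by auto
      have "w (z + t *\<^sub>R (x - z)) - w z \<le> t * (w x - w z - (1 - t) / 2 * (N (x - z))\<^sup>2)"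
        using sc_ineq[OF x z, of t] t by (simp add: algebra_simps)
      then show ?case using t by (simp add: divide_le_eq mult.commute)
    qed
  qed
  have "gw z \<bullet> (x - z) \<le> w x - w z - (1 - 0) / 2 * (N (x - z))\<^sup>2"
    by (rule tendsto_le[OF _ lim2 lim1 ev]) simp
  then show ?thesis unfolding bregman_def by simp
qed

lemma bregman_nonneg: "z \<in> S \<Longrightarrow> x \<in> S \<Longrightarrow> 0 \<le> bregman w gw z x"
  using bregman_lb[of z x] by (smt (verit) zero_le_power2 divide_nonneg_pos)

lemma bregman_sym_sum:
  assumes "a \<in> S" "b \<in> S"
  shows "(N (a - b))\<^sup>2 \<le> (gw a - gw b) \<bullet> (a - b)"
proof -
  have "(gw a - gw b) \<bullet> (a - b) = bregman w gw a b + bregman w gw b a"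
    by (simp add: bregman_def inner_diff_left inner_diff_right inner_commute algebra_simps)
  moreover have "N (b - a) = N (a - b)"
    using norm_on_minus[OF N blkspace_diff[OF S_blk[OF assms(1)] S_blk[OF assms(2)]]] by simp
  ultimately show ?thesis using bregman_lb[OF assms] bregman_lb[OF assms(2,1)] by simp
qed

definition "obj z y gm u = y \<bullet> (u - z) + bregman w gw z u / gm + chi u"

lemma obj_cont: "gm > 0 \<Longrightarrow> continuous_on S (obj z y gm)"
  unfolding obj_def bregman_def
  by (intro continuous_intros w_cont chi_cont) auto

lemma chi_conv: "a \<in> S \<Longrightarrow> b \<in> S \<Longrightarrow> 0 \<le> t \<Longrightarrow> t \<le> 1 \<Longrightarrow>
    chi (b + t *\<^sub>R (a - b)) \<le> t * chi a + (1 - t) * chi b"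
  using convex_onD[OF chi, of t b a] S_blk[of a] S_blk[of b]
  by (simp add: algebra_simps)

lemma obj_sc:
  assumes a: "a \<in> S" and b: "b \<in> S" and t: "0 \<le> t" "t \<le> 1" and gm: "gm > 0"
  shows "obj z y gm (b + t *\<^sub>R (a - b)) \<le> t * obj z y gm a + (1 - t) * obj z y gm b
           - t * (1 - t) / (2 * gm) * (N (a - b))\<^sup>2"
proof -
  let ?q = "b + t *\<^sub>R (a - b)"
  have lin: "y \<bullet> (?q - z) = t * (y \<bullet> (a - z)) + (1 - t) * (y \<bullet> (b - z))"
    by (simp add: inner_diff_right inner_add_right algebra_simps)
  have lin2: "gw z \<bullet> (?q - z) = t * (gw z \<bullet> (a - z)) + (1 - t) * (gw z \<bullet> (b - z))"
    by (simp add: inner_diff_right inner_add_right algebra_simps)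
  have wq: "w ?q \<le> t * w a + (1 - t) * w b - t * (1 - t) / 2 * (N (a - b))\<^sup>2"
    by (rule sc_ineq[OF a b t])
  have cq: "chi ?q \<le> t * chi a + (1 - t) * chi b" by (rule chi_conv[OF a b t])
  have "bregman w gw z ?q / gm \<le> (t * bregman w gw z a + (1 - t) * bregman w gw z b
        - t * (1 - t) / 2 * (N (a - b))\<^sup>2) / gm"
    using wq gm unfolding bregman_def lin2 by (intro divide_right_mono) (auto simp: algebra_simps)
  also have "\<dots> = t * (bregman w gw z a / gm) + (1 - t) * (bregman w gw z b / gm)
        - t * (1 - t) / (2 * gm) * (N (a - b))\<^sup>2"
    using gm by (simp add: field_simps)
  finally show ?thesis using cq lin unfolding obj_def by (simp add: algebra_simps)
qed

lemma obj_min_exists: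
  assumes gm: "gm > 0"
  shows "\<exists>p\<in>S. \<forall>u\<in>S. obj z y gm p \<le> obj z y gm u"
proof -
  let ?h = "obj z y gm"
  obtain z0 where z0: "z0 \<in> S" using S(1) by auto
  have K1: "compact (S \<inter> cball z0 1)" by (intro closed_Int_compact compact_cball S(2)) 
  have K1ne: "S \<inter> cball z0 1 \<noteq> {}" using z0 by auto
  obtain p1 where p1: "p1 \<in> S \<inter> cball z0 1" and m1: "\<forall>u\<in>S \<inter> cball z0 1. ?h p1 \<le> ?h u"
    using continuous_attains_inf[OF K1 K1ne continuous_on_subset[OF obj_cont[OF gm]]] by blast
  define R where "R = max 2 (4 * gm * (?h z0 - ?h p1) / cN\<^sup>2)"
  have far: "?h z0 < ?h u" if u: "u \<in> S" "norm (u - z0) > R" for u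
  proof (rule ccontr)
    assume "\<not> ?h z0 < ?h u"
    then have hu: "?h u \<le> ?h z0" by simp
    define r where "r = norm (u - z0)"
    have r2: "r \<ge> 2" "r > R" using u unfolding r_def R_def by auto
    define t where "t = 1 / r"
    have t: "0 \<le> t" "t \<le> 1" "t \<le> 1/2" using r2 unfolding t_def by (auto simp: field_simps)
    let ?p = "z0 + t *\<^sub>R (u - z0)"
    have pS: "?p \<in> S"
    proof -
      have "?p = (1 - t) *\<^sub>R z0 + t *\<^sub>R u" by (simp add: algebra_simps)
      then show ?thesis using convexD_alt[OF S(3) z0 u(1) t(1,2)] by simp
    qed
    have "norm (?p - z0) = t * r" using t unfolding r_def by simp
    also have "\<dots> = 1" using r2 unfolding t_def by simp
    finally have "?p \<in> cball z0 1" by (simp add: dist_norm norm_minus_commute)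
    with pS m1 have hp: "?h p1 \<le> ?h ?p" by blast
    have sc: "?h ?p \<le> t * ?h u + (1 - t) * ?h z0 - t * (1 - t) / (2 * gm) * (N (u - z0))\<^sup>2"
      by (rule obj_sc[OF u(1) z0 t(1,2) gm])
    have Nl: "cN * r \<le> N (u - z0)" using cN(2)[OF blkspace_diff[OF S_blk[OF u(1)] S_blk[OF z0]]]
      unfolding r_def .
    have "(cN * r)\<^sup>2 \<le> (N (u - z0))\<^sup>2" using Nl cN(1) r2 by (intro power_mono) auto
    then have "t * (1 - t) / (2 * gm) * (cN * r)\<^sup>2 \<le> t * (1 - t) / (2 * gm) * (N (u - z0))\<^sup>2"
      using t gm by (intro mult_left_mono) auto
    moreover have "t * (1 - t) / (2 * gm) * (cN * r)\<^sup>2 = (1 - t) * cN\<^sup>2 * r / (2 * gm)"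
    proof -
      have "r \<noteq> 0" using r2 gm by auto
      have "t * (1 - t) / (2 * gm) * (cN * r)\<^sup>2 = (t * r) * (1 - t) * cN\<^sup>2 * r / (2 * gm)"
        by (simp add: power2_eq_square)
      also have "t * r = 1" unfolding t_def using \<open>r \<noteq> 0\<close> by simp
      finally show ?thesis by simp
    qed
    moreover have "(1 - t) * cN\<^sup>2 * r / (2 * gm) \<ge> cN\<^sup>2 * r / (4 * gm)"
    proof -
      have X: "cN\<^sup>2 * r / (2 * gm) \<ge> 0" using gm r2 by auto
      have "(1 - t) * cN\<^sup>2 * r / (2 * gm) = (1 - t) * (cN\<^sup>2 * r / (2 * gm))" by simp
      also have "\<dots> \<ge> (1/2) * (cN\<^sup>2 * r / (2 * gm))" using X t by (intro mult_right_mono) auto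
      finally show ?thesis by simp
    qed
    moreover have "t * ?h u + (1 - t) * ?h z0 \<le> ?h z0"
    proof -
      have "t * ?h u \<le> t * ?h z0" using hu t by (intro mult_left_mono) auto
      then show ?thesis by (simp add: algebra_simps)
    qed
    ultimately have key: "?h p1 \<le> ?h z0 - cN\<^sup>2 * r / (4 * gm)"
      using hp sc by linarith
    define Q where "Q = ?h z0 - ?h p1"
    have "cN\<^sup>2 * r / (4 * gm) \<le> Q" using key unfolding Q_def by linarith
    then have "cN\<^sup>2 * r \<le> Q * (4 * gm)" using gm by (simp add: divide_le_eq)
    then have "r \<le> 4 * gm * Q / cN\<^sup>2" using cN(1) by (simp add: le_divide_eq mult.commute)
    then have "r \<le> 4 * gm * (?h z0 - ?h p1) / cN\<^sup>2" unfolding Q_def .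
    then show False using r2 unfolding R_def by linarith
  qed
  have K: "compact (S \<inter> cball z0 R)" by (intro closed_Int_compact compact_cball S(2))
  have Kne: "S \<inter> cball z0 R \<noteq> {}" using z0 unfolding R_def by auto
  obtain p where p: "p \<in> S \<inter> cball z0 R" and m: "\<forall>u\<in>S \<inter> cball z0 R. ?h p \<le> ?h u"
    using continuous_attains_inf[OF K Kne continuous_on_subset[OF obj_cont[OF gm]]] by blast
  have "z0 \<in> S \<inter> cball z0 R" using z0 unfolding R_def by auto
  then have pz0: "?h p \<le> ?h z0" using m by blast
  have "\<forall>u\<in>S. ?h p \<le> ?h u"
  proof
    fix u assume u: "u \<in> S"
    show "?h p \<le> ?h u"
    proof (cases "norm (u - z0) \<le> R")
      case True
      then have "u \<in> cball z0 R" by (simp add: dist_norm norm_minus_commute)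
      then show ?thesis using m u by blast
    next
      case False
      then show ?thesis using far[OF u] pz0 by simp
    qed
  qed
  then show ?thesis using p by blast
qed

abbreviation "px z y gm \<equiv> prox S w gw chi z y gm"

lemma prox_spec:
  assumes gm: "gm > 0"
  shows "px z y gm \<in> S \<and> (\<forall>u\<in>S. obj z y gm (px z y gm) \<le> obj z y gm u)"
proof -
  have "\<exists>p. p \<in> S \<and> (\<forall>u\<in>S. obj z y gm p \<le> obj z y gm u)"
    using obj_min_exists[OF gm] by blast
  then show ?thesis unfolding prox_def obj_def[symmetric] by (rule someI_ex)
qed

lemma prox_in: "gm > 0 \<Longrightarrow> px z y gm \<in> S"
  using prox_spec by blast

lemma prox_vi:
  assumes gm: "gm > 0" and u: "u \<in> S"
  shows "gm * (y \<bullet> (px z y gm - u) + chi (px z y gm) - chi u)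
           \<le> (gw (px z y gm) - gw z) \<bullet> (u - px z y gm)"
proof -
  define p where "p = px z y gm"
  have pS: "p \<in> S" and pmin: "\<forall>u\<in>S. obj z y gm p \<le> obj z y gm u"
    using prox_spec[OF gm] unfolding p_def by auto
  define A where "A = y \<bullet> (u - p) - gw z \<bullet> (u - p) / gm + chi u - chi p"
  have lim1: "((\<lambda>t. (w (p + t *\<^sub>R (u - p)) - w p) / t) \<longlongrightarrow> gw p \<bullet> (u - p)) (at_right 0)"
    using w_diff pS u S(3) by (intro dq_limit) auto
  then have lim: "((\<lambda>t. A + (w (p + t *\<^sub>R (u - p)) - w p) / t / gm) \<longlongrightarrow> A + gw p \<bullet> (u - p) / gm) (at_right 0)"
    using gm by (intro tendsto_intros) auto
  have ev: "eventually (\<lambda>t. 0 \<le> A + (w (p + t *\<^sub>R (u - p)) - w p) / t / gm) (at_right 0)"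
  proof -
    have "eventually (\<lambda>t::real. t \<in> {0<..<1}) (at_right 0)"
      by (intro eventually_at_right_real) auto
    then show ?thesis
    proof eventually_elim
      case (elim t)
      then have t: "0 < t" "t < 1" by auto
      let ?q = "p + t *\<^sub>R (u - p)"
      have qS: "?q \<in> S"
      proof -
        have "?q = (1 - t) *\<^sub>R p + t *\<^sub>R u" by (simp add: algebra_simps)
        then show ?thesis using convexD_alt[OF S(3) pS u, of t] t by simp
      qed
      have "obj z y gm p \<le> obj z y gm ?q" using pmin qS by blast
      then have "0 \<le> y \<bullet> (?q - z) - y \<bullet> (p - z) + (bregman w gw z ?q - bregman w gw z p) / gm + chi ?q - chi p"
        unfolding obj_def by (simp add: diff_divide_distrib)
      also have "y \<bullet> (?q - z) - y \<bullet> (p - z) = t * (y \<bullet> (u - p))"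
        by (simp add: inner_diff_right inner_add_right)
      also have "bregman w gw z ?q - bregman w gw z p = w ?q - w p - t * (gw z \<bullet> (u - p))"
        unfolding bregman_def by (simp add: inner_diff_right inner_add_right)
      finally have h0: "0 \<le> t * (y \<bullet> (u - p)) + (w ?q - w p - t * (gw z \<bullet> (u - p))) / gm + chi ?q - chi p" .
      have "chi ?q - chi p \<le> t * (chi u - chi p)"
        using chi_conv[OF u pS, of t] t by (simp add: algebra_simps)
      with h0 have "0 \<le> t * (y \<bullet> (u - p)) + (w ?q - w p - t * (gw z \<bullet> (u - p))) / gm + t * (chi u - chi p)"
        by linarith
      also have "\<dots> = t * (A + (w ?q - w p) / t / gm)"
        unfolding A_def using t gm by (simp add: field_simps)
      finally show ?case using t by (simp add: zero_le_mult_iff)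
    qed
  qed
  have "0 \<le> A + gw p \<bullet> (u - p) / gm"
    by (rule tendsto_lowerbound[OF lim ev]) simp
  then have "0 \<le> gm * (A + gw p \<bullet> (u - p) / gm)" using gm by simp
  also have "gm * (A + gw p \<bullet> (u - p) / gm) = gm * (y \<bullet> (u - p) + chi u - chi p) + (gw p - gw z) \<bullet> (u - p)"
    unfolding A_def using gm by (simp add: field_simps inner_diff_left)
  finally show ?thesis unfolding p_def[symmetric]
    by (simp add: inner_diff_right algebra_simps)
qed

lemma three_point: "(gw p - gw z) \<bullet> (u - p) = bregman w gw z u - bregman w gw p u - bregman w gw z p"
  unfolding bregman_def by (simp add: inner_diff_left inner_diff_right algebra_simps)

lemma prox_lip:
  assumes gm: "gm > 0"
  shows "cN\<^sup>2 * norm (px z1 y1 gm - px z2 y2 gm)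
           \<le> norm (gm *\<^sub>R (y2 - y1) + (gw z1 - gw z2))"
proof -
  define p1 where "p1 = px z1 y1 gm"
  define p2 where "p2 = px z2 y2 gm"
  have p1: "p1 \<in> S" and p2: "p2 \<in> S" using prox_in[OF gm] unfolding p1_def p2_def by auto
  have v1: "gm * (y1 \<bullet> (p1 - p2) + chi p1 - chi p2) \<le> (gw p1 - gw z1) \<bullet> (p2 - p1)"
    using prox_vi[OF gm p2] unfolding p1_def .
  have v2: "gm * (y2 \<bullet> (p2 - p1) + chi p2 - chi p1) \<le> (gw p2 - gw z2) \<bullet> (p1 - p2)"
    using prox_vi[OF gm p1] unfolding p2_def .
  have sum: "(gw p1 - gw p2) \<bullet> (p1 - p2) \<le> (gm *\<^sub>R (y2 - y1) + (gw z1 - gw z2)) \<bullet> (p1 - p2)"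
    using v1 v2 by (simp add: inner_diff_left inner_diff_right inner_add_left algebra_simps)
  have "(cN * norm (p1 - p2))\<^sup>2 \<le> (N (p1 - p2))\<^sup>2"
    using cN(2)[OF blkspace_diff[OF S_blk[OF p1] S_blk[OF p2]]] cN(1) by (intro power_mono) auto
  also have "\<dots> \<le> (gw p1 - gw p2) \<bullet> (p1 - p2)" by (rule bregman_sym_sum[OF p1 p2])
  also have "\<dots> \<le> (gm *\<^sub>R (y2 - y1) + (gw z1 - gw z2)) \<bullet> (p1 - p2)" by (rule sum)
  also have "\<dots> \<le> norm (gm *\<^sub>R (y2 - y1) + (gw z1 - gw z2)) * norm (p1 - p2)"
    by (rule norm_cauchy_schwarz)
  finally have "cN\<^sup>2 * norm (p1 - p2) * norm (p1 - p2) \<le> norm (gm *\<^sub>R (y2 - y1) + (gw z1 - gw z2)) * norm (p1 - p2)"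
    by (simp add: power2_eq_square algebra_simps)
  then show ?thesis unfolding p1_def[symmetric] p2_def[symmetric]
    by (cases "p1 = p2") (auto simp: mult_le_cancel_right)
qed

lemma prox_cont:
  assumes gm: "gm > 0"
  shows "continuous_on (S \<times> UNIV) (\<lambda>p. px (fst p) (snd p) gm)"
  unfolding continuous_on_iff
proof (intro ballI allI impI)
  fix p :: "(real^'n) \<times> (real^'n)" and e :: real
  assume p: "p \<in> S \<times> UNIV" and e: "0 < e"
  have e2: "0 < e * cN\<^sup>2 / 2" using e cN(1) by simp
  obtain d1 where d1: "d1 > 0" "\<forall>z'\<in>S. dist z' (fst p) < d1 \<longrightarrow> dist (gw z') (gw (fst p)) < e * cN\<^sup>2 / 2"
    using w_C1 p e2 unfolding continuous_on_iff by (metis mem_Times_iff)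
  define d where "d = min d1 (e * cN\<^sup>2 / (2 * gm))"
  have d: "d > 0" unfolding d_def using d1 e cN(1) gm by simp
  show "\<exists>d>0. \<forall>x'\<in>S \<times> UNIV. dist x' p < d \<longrightarrow> dist (px (fst x') (snd x') gm) (px (fst p) (snd p) gm) < e"
  proof (intro exI[of _ d] conjI d ballI impI)
    fix q assume q: "q \<in> S \<times> UNIV" and dq: "dist q p < d"
    have h1: "dist (fst q) (fst p) < d1" using dist_fst_le[of q p] dq unfolding d_def by linarith
    have h2: "dist (snd q) (snd p) < e * cN\<^sup>2 / (2 * gm)" using dist_snd_le[of q p] dq unfolding d_def by linarith
    have g1: "norm (gw (fst q) - gw (fst p)) < e * cN\<^sup>2 / 2"
      using d1(2) q h1 by (auto simp: dist_norm mem_Times_iff)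
    have g2: "norm (gm *\<^sub>R (snd p - snd q)) < e * cN\<^sup>2 / 2"
    proof -
      have "norm (gm *\<^sub>R (snd p - snd q)) = gm * dist (snd q) (snd p)"
        using gm by (simp add: dist_norm norm_minus_commute)
      also have "\<dots> < gm * (e * cN\<^sup>2 / (2 * gm))" using h2 gm by (intro mult_strict_left_mono) auto
      also have "\<dots> = e * cN\<^sup>2 / 2" using gm by simp
      finally show ?thesis .
    qed
    have "cN\<^sup>2 * norm (px (fst q) (snd q) gm - px (fst p) (snd p) gm)
        \<le> norm (gm *\<^sub>R (snd p - snd q) + (gw (fst q) - gw (fst p)))"
      by (rule prox_lip[OF gm])
    also have "\<dots> \<le> norm (gm *\<^sub>R (snd p - snd q)) + norm (gw (fst q) - gw (fst p))"
      by (rule norm_triangle_ineq)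
    also have "\<dots> < e * cN\<^sup>2" using g1 g2 by simp
    finally show "dist (px (fst q) (snd q) gm) (px (fst p) (snd p) gm) < e"
      using cN(1) by (simp add: dist_norm mult.commute)
  qed
qed

end




locale sbmd =
  fixes b :: nat and blk :: "'n::finite \<Rightarrow> nat"
    and Xb :: "nat \<Rightarrow> (real^'n) set"
    and nrm :: "nat \<Rightarrow> real^'n \<Rightarrow> real"
    and f :: "real^'n \<Rightarrow> real" and g :: "real^'n \<Rightarrow> real^'n"
    and D :: "'e measure"
    and G :: "real^'n \<Rightarrow> 'e \<Rightarrow> real^'n"
    and L \<sigma>b :: "nat \<Rightarrow> real"
    and w :: "nat \<Rightarrow> real^'n \<Rightarrow> real" and gw :: "nat \<Rightarrow> real^'n \<Rightarrow> real^'n"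
    and chi :: "nat \<Rightarrow> real^'n \<Rightarrow> real"
    and x1 xstar :: "real^'n" and X :: "(real^'n) set" and \<phi> :: "real^'n \<Rightarrow> real" and gm :: real
  assumes X_def: "X = {x. \<forall>i\<in>{1..b}. blkproj blk i x \<in> Xb i}"
    and phi_def: "\<phi> = (\<lambda>x. f x + (\<Sum>i=1..b. chi i (blkproj blk i x)))"
    and b_pos: "1 \<le> b"
    and blk_range: "\<forall>j. blk j \<in> {1..b}"
    and Xb: "\<forall>i\<in>{1..b}. Xb i \<noteq> {} \<and> closed (Xb i) \<and> convex (Xb i) \<and> Xb i \<subseteq> blkspace blk i"
    and nrm: "\<forall>i\<in>{1..b}. norm_on (blkspace blk i) (nrm i)"
    and f_convex: "convex_on X f"
    and f_grad: "\<forall>x\<in>X. (f has_derivative (\<lambda>h. g x \<bullet> h)) (at x within X)"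
    and g_Lip: "\<forall>i\<in>{1..b}. \<forall>x \<rho>. x \<in> X \<longrightarrow> \<rho> \<in> blkspace blk i \<longrightarrow> x + \<rho> \<in> X \<longrightarrow>
        dual_norm (blkspace blk i) (nrm i) (blkproj blk i (g (x + \<rho>)) - blkproj blk i (g x))
          \<le> L i * nrm i \<rho>"
    and chi_convex: "\<forall>i\<in>{1..b}. convex_on (blkspace blk i) (chi i)"
    and D_prob: "prob_space D"
    and G_meas: "(\<lambda>(x, e). G x e) \<in> borel_measurable (borel \<Otimes>\<^sub>M D)"
    and G_unbiased: "\<forall>x\<in>X. integrable D (G x) \<and> (\<integral>e. G x e \<partial>D) = g x"
    and G_var: "\<forall>i\<in>{1..b}. \<forall>x\<in>X.
        (\<integral>\<^sup>+e. ennreal ((dual_norm (blkspace blk i) (nrm i)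
                     (blkproj blk i (G x e) - blkproj blk i (g x)))\<^sup>2) \<partial>D)
          \<le> ennreal ((\<sigma>b i)\<^sup>2)"
    and w_diff: "\<forall>i\<in>{1..b}. \<forall>z\<in>Xb i. (w i has_derivative (\<lambda>h. gw i z \<bullet> h)) (at z within Xb i)"
    and w_C1: "\<forall>i\<in>{1..b}. continuous_on (Xb i) (gw i)"
    and w_sc: "\<forall>i\<in>{1..b}. strongly_convex_wrt (Xb i) (nrm i) (w i)"
    and x1_in: "x1 \<in> X"
    and xstar_in: "xstar \<in> X" and xstar_opt: "\<forall>x\<in>X. \<phi> xstar \<le> \<phi> x"
    and gm_pos: "gm > 0" and gm_L: "\<forall>i\<in>{1..b}. gm * L i \<le> 1/2"
begin

lemma pb: "i \<in> {1..b} \<Longrightarrow> proxblk blk i (nrm i) (Xb i) (w i) (gw i) (chi i)"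
  unfolding proxblk_def proxblk_axioms_def nrmblk_def
  using Xb nrm w_diff w_C1 w_sc chi_convex by auto

lemma X_blk: "x \<in> X \<Longrightarrow> i \<in> {1..b} \<Longrightarrow> blkproj blk i x \<in> Xb i"
  unfolding X_def by auto

lemma X_closed: "closed X"
proof -
  have "X = (\<Inter>i\<in>{1..b}. blkproj blk i -` Xb i)" unfolding X_def by auto
  moreover have "closed (blkproj blk i -` Xb i)" if "i \<in> {1..b}" for i
  proof -
    have "closed (Xb i)" using Xb that by auto
    then show ?thesis using continuous_closed_vimage[of "Xb i" "blkproj blk i"]
      linear_continuous_at[OF linear_conv_bounded_linear[THEN iffD1, OF linear_blkproj]]
      by blast
  qed
  ultimately show ?thesis by auto
qed

lemma X_convex: "convex X"
  unfolding X_def convex_alt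
proof (intro allI ballI impI CollectI)
  fix x y :: "real^'n" and u :: real and i
  assume x: "x \<in> {x. \<forall>i\<in>{1..b}. blkproj blk i x \<in> Xb i}" and y: "y \<in> {x. \<forall>i\<in>{1..b}. blkproj blk i x \<in> Xb i}"
    and u: "0 \<le> u \<and> u \<le> 1" and i: "i \<in> {1..b}"
  have "blkproj blk i ((1 - u) *\<^sub>R x + u *\<^sub>R y) = (1 - u) *\<^sub>R blkproj blk i x + u *\<^sub>R blkproj blk i y"
    by (simp add: blkproj_add blkproj_scale)
  also have "\<dots> \<in> Xb i" using Xb i x y u by (intro convexD_alt) auto
  finally show "blkproj blk i ((1 - u) *\<^sub>R x + u *\<^sub>R y) \<in> Xb i" .
qed

lemma update_blk:
  assumes P: "P \<in> blkspace blk i"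
  shows "blkproj blk k (x - blkproj blk i x + P) = (if k = i then P else blkproj blk k x)"
  using P by (auto simp: blkproj_def blkspace_def vec_eq_iff)

lemma update_X:
  assumes x: "x \<in> X" and i: "i \<in> {1..b}" and P: "P \<in> Xb i"
  shows "x - blkproj blk i x + P \<in> X"
proof -
  have "P \<in> blkspace blk i" using Xb i P by auto
  then show ?thesis using x P unfolding X_def by (auto simp: update_blk)
qed

lemma f_cont: "continuous_on X f"
  unfolding continuous_on_eq_continuous_within
  using f_grad has_derivative_continuous by blast

lemma f_grad_ineq:
  assumes x: "x \<in> X" and u: "u \<in> X"
  shows "f x + g x \<bullet> (u - x) \<le> f u"
proof -
  have lim1: "((\<lambda>t. (f (x + t *\<^sub>R (u - x)) - f x) / t) \<longlongrightarrow> g x \<bullet> (u - x)) (at_right 0)"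
    using f_grad x u X_convex by (intro dq_limit) auto
  have ev: "eventually (\<lambda>t. (f (x + t *\<^sub>R (u - x)) - f x) / t \<le> f u - f x) (at_right 0)"
  proof -
    have "eventually (\<lambda>t::real. t \<in> {0<..<1}) (at_right 0)"
      by (intro eventually_at_right_real) auto
    then show ?thesis
    proof eventually_elim
      case (elim t)
      then have t: "0 < t" "t < 1" by auto
      have "f ((1 - t) *\<^sub>R x + t *\<^sub>R u) \<le> (1 - t) * f x + t * f u"
        using convex_onD[OF f_convex, of t x u] t x u by auto
      moreover have "(1 - t) *\<^sub>R x + t *\<^sub>R u = x + t *\<^sub>R (u - x)" by (simp add: algebra_simps)
      ultimately have "f (x + t *\<^sub>R (u - x)) - f x \<le> t * (f u - f x)" by (simp add: algebra_simps)
      then show ?case using t by (simp add: divide_le_eq mult.commute)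
    qed
  qed
  have "g x \<bullet> (u - x) \<le> f u - f x"
    by (rule tendsto_le[OF _ tendsto_const lim1 ev]) simp
  then show ?thesis by simp
qed

lemma descent:
  assumes x: "x \<in> X" and i: "i \<in> {1..b}" and r: "\<rho> \<in> blkspace blk i" and xr: "x + \<rho> \<in> X"
  shows "f (x + \<rho>) \<le> f x + g x \<bullet> \<rho> + L i / 2 * (nrm i \<rho>)\<^sup>2"
proof -
  interpret nrmblk blk i "nrm i" using pb[OF i] by (simp add: proxblk_def)
  define n where "n = nrm i \<rho>"
  define \<psi> where "\<psi> = (\<lambda>t. f (x + t *\<^sub>R \<rho>) - t * (g x \<bullet> \<rho>) - L i / 2 * t\<^sup>2 * n\<^sup>2)"
  have seg: "x + t *\<^sub>R \<rho> \<in> X" if "0 \<le> t" "t \<le> 1" for t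
  proof -
    have "x + t *\<^sub>R \<rho> = (1 - t) *\<^sub>R x + t *\<^sub>R (x + \<rho>)" by (simp add: algebra_simps)
    then show ?thesis using convexD_alt[OF X_convex x xr that] by simp
  qed
  have der: "(\<psi> has_derivative (\<lambda>s. s * (g (x + t *\<^sub>R \<rho>) \<bullet> \<rho> - g x \<bullet> \<rho> - L i * t * n\<^sup>2))) (at t within {0..1})"
    if t: "0 \<le> t" "t \<le> 1" for t
  proof -
    let ?p = "\<lambda>t::real. x + t *\<^sub>R \<rho>"
    have p: "(?p has_derivative (\<lambda>s. s *\<^sub>R \<rho>)) (at t within {0..1})"
      by (auto intro!: derivative_eq_intros)
    have img: "?p ` {0..1} \<subseteq> X" using seg by auto
    have d1: "(f has_derivative (\<lambda>h. g (?p t) \<bullet> h)) (at (?p t) within ?p ` {0..1})"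
      using has_derivative_subset[OF f_grad[rule_format, OF seg[OF t]] img] .
    have "((f \<circ> ?p) has_derivative ((\<lambda>h. g (?p t) \<bullet> h) \<circ> (\<lambda>s. s *\<^sub>R \<rho>))) (at t within {0..1})"
      by (rule diff_chain_within[OF p d1])
    then have "((\<lambda>t. f (x + t *\<^sub>R \<rho>)) has_derivative (\<lambda>s. s * (g (x + t *\<^sub>R \<rho>) \<bullet> \<rho>))) (at t within {0..1})"
      by (simp add: o_def inner_scaleR_right)
    then show ?thesis unfolding \<psi>_def
      by (auto intro!: derivative_eq_intros simp: algebra_simps power2_eq_square)
  qed
  obtain t where t: "t \<in> {0<..<1}"
    and eq: "\<psi> 1 - \<psi> 0 = (1 - 0) * (g (x + t *\<^sub>R \<rho>) \<bullet> \<rho> - g x \<bullet> \<rho> - L i * t * n\<^sup>2)"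
    using mvt_simple[of 0 1 \<psi>, OF _ der] by auto
  have "(g (x + t *\<^sub>R \<rho>) - g x) \<bullet> \<rho> = (blkproj blk i (g (x + t *\<^sub>R \<rho>)) - blkproj blk i (g x)) \<bullet> \<rho>"
    using blkproj_inner[OF r] by (simp add: inner_diff_left)
  also have "\<dots> \<le> dn (blkproj blk i (g (x + t *\<^sub>R \<rho>)) - blkproj blk i (g x)) * n"
    unfolding n_def by (rule dn_le[OF r])
  also have "\<dots> \<le> L i * nrm i (t *\<^sub>R \<rho>) * n"
    using g_Lip i x blkspace_scale[OF r, of t] seg[of t] t dn_nonneg
    by (intro mult_right_mono) (auto simp: n_def intro: norm_on_nonneg[OF N r])
  also have "\<dots> = L i * t * n\<^sup>2"
    using norm_on_scale[OF N r, of t] t unfolding n_def by (simp add: power2_eq_square)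
  finally have "\<psi> 1 - \<psi> 0 \<le> 0" using eq by (simp add: inner_diff_left)
  then show ?thesis unfolding \<psi>_def n_def by simp
qed

definition "step x ie = sbmd_step blk Xb w gw chi G gm x ie"
definition "Vb i x = bregman (w i) (gw i) (blkproj blk i x) (blkproj blk i xstar)"
definition "W x = (\<Sum>i=1..b. Vb i x)"
definition "\<Phi> x = real b * gm * (\<phi> x - \<phi> xstar) + real b * W x"
definition "del i x e = blkproj blk i (G x e) - blkproj blk i (g x)"
definition "cc i x = blkproj blk i (g x) \<bullet> (blkproj blk i x - blkproj blk i xstar)
   + chi i (blkproj blk i x) - chi i (blkproj blk i xstar)"
abbreviation "Pr i x e \<equiv> prox (Xb i) (w i) (gw i) (chi i) (blkproj blk i x) (blkproj blk i (G x e)) gm"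

lemma step_eq: "step x (i, e) = x - blkproj blk i x + Pr i x e"
  unfolding step_def sbmd_step_def by simp

lemma Pr_in: "i \<in> {1..b} \<Longrightarrow> Pr i x e \<in> Xb i"
  using proxblk.prox_in[OF pb gm_pos] by blast

lemma step_X: "x \<in> X \<Longrightarrow> i \<in> {1..b} \<Longrightarrow> step x (i, e) \<in> X"
  unfolding step_eq by (intro update_X Pr_in)

lemma Pr_blk: "i \<in> {1..b} \<Longrightarrow> Pr i x e \<in> blkspace blk i"
  using Pr_in Xb by blast

lemma W_step:
  assumes i: "i \<in> {1..b}"
  shows "W (step x (i, e)) = W x - Vb i x + bregman (w i) (gw i) (Pr i x e) (blkproj blk i xstar)"
proof -
  have "W (step x (i, e)) = (\<Sum>k=1..b. if k = i then bregman (w i) (gw i) (Pr i x e) (blkproj blk i xstar) else Vb k x)"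
    unfolding W_def step_eq Vb_def using update_blk[OF Pr_blk[OF i]] by (intro sum.cong) auto
  also have "\<dots> = bregman (w i) (gw i) (Pr i x e) (blkproj blk i xstar) + (\<Sum>k\<in>{1..b} - {i}. Vb k x)"
    using i by (subst sum.remove[of _ i]) auto
  also have "W x = Vb i x + (\<Sum>k\<in>{1..b} - {i}. Vb k x)"
    unfolding W_def using i by (subst sum.remove[of _ i]) auto
  ultimately show ?thesis by simp
qed

lemma phi_step:
  assumes i: "i \<in> {1..b}"
  shows "\<phi> (step x (i, e)) = \<phi> x + f (step x (i, e)) - f x + chi i (Pr i x e) - chi i (blkproj blk i x)"
proof -
  have "(\<Sum>k=1..b. chi k (blkproj blk k (step x (i, e))))
      = (\<Sum>k=1..b. if k = i then chi i (Pr i x e) else chi k (blkproj blk k x))"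
    unfolding step_eq using update_blk[OF Pr_blk[OF i]] by (intro sum.cong) auto
  also have "\<dots> = chi i (Pr i x e) + (\<Sum>k\<in>{1..b} - {i}. chi k (blkproj blk k x))"
    using i by (subst sum.remove[of _ i]) auto
  also have "(\<Sum>k=1..b. chi k (blkproj blk k x)) = chi i (blkproj blk i x) + (\<Sum>k\<in>{1..b} - {i}. chi k (blkproj blk k x))"
    using i by (subst sum.remove[of _ i]) auto
  ultimately show ?thesis unfolding phi_def by simp
qed

lemma per_sample:
  assumes x: "x \<in> X" and i: "i \<in> {1..b}"
  shows "gm * (cc i x + \<phi> (step x (i, e)) - \<phi> x)
     \<le> Vb i x - bregman (w i) (gw i) (Pr i x e) (blkproj blk i xstar)
        - gm * (del i x e \<bullet> (blkproj blk i x - blkproj blk i xstar))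
        + gm\<^sup>2 * (dual_norm (blkspace blk i) (nrm i) (del i x e))\<^sup>2"
proof -
  interpret proxblk blk i "nrm i" "Xb i" "w i" "gw i" "chi i" by (rule pb[OF i])
  define z where "z = blkproj blk i x"
  define u where "u = blkproj blk i xstar"
  define y where "y = blkproj blk i (G x e)"
  define gi where "gi = blkproj blk i (g x)"
  define d where "d = del i x e"
  define P where "P = Pr i x e"
  define \<rho> where "\<rho> = P - z"
  define n where "n = nrm i \<rho>"
  define dd where "dd = dn d"
  have zS: "z \<in> Xb i" unfolding z_def by (rule X_blk[OF x i])
  have uS: "u \<in> Xb i" unfolding u_def by (rule X_blk[OF xstar_in i])
  have PS: "P \<in> Xb i" unfolding P_def by (rule Pr_in[OF i])
  have rb: "\<rho> \<in> blkspace blk i" unfolding \<rho>_def by (intro blkspace_diff S_blk PS zS)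
  have ydef: "y = gi + d" unfolding y_def gi_def d_def del_def by simp
  have st: "step x (i, e) = x + \<rho>" unfolding step_eq \<rho>_def P_def z_def by simp
  have stX: "x + \<rho> \<in> X" using step_X[OF x i, of e] st by simp
  have vi: "gm * (y \<bullet> (P - u) + chi i P - chi i u) \<le> Vb i x - bregman (w i) (gw i) P u - bregman (w i) (gw i) z P"
    using prox_vi[OF gm_pos uS, where z="blkproj blk i x" and y=y] three_point
    unfolding P_def y_def Vb_def z_def u_def by simp
  have desc: "f (x + \<rho>) \<le> f x + gi \<bullet> \<rho> + L i / 2 * n\<^sup>2"
    using descent[OF x i rb stX] blkproj_inner[OF rb, of "g x"] unfolding gi_def n_def by simp
  have phis: "\<phi> (step x (i, e)) = \<phi> x + f (x + \<rho>) - f x + chi i P - chi i z"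
    using phi_step[OF i, of x e] st unfolding P_def z_def by simp
  have bl: "n\<^sup>2 / 2 \<le> bregman (w i) (gw i) z P"
    using bregman_lb[OF zS PS] unfolding n_def \<rho>_def .
  have dl: "- (d \<bullet> \<rho>) \<le> dd * n"
    using dn_le_abs[OF rb, of d] unfolding dd_def n_def by linarith
  have am: "gm * (dd * n) \<le> gm\<^sup>2 * dd\<^sup>2 + n\<^sup>2 / 4"
  proof -
    have "0 \<le> (gm * dd - n / 2)\<^sup>2" by simp
    then show ?thesis by (simp add: power2_eq_square algebra_simps)
  qed
  have gL: "gm * (L i / 2 * n\<^sup>2) \<le> n\<^sup>2 / 4"
  proof -
    have "gm * (L i / 2 * n\<^sup>2) = (gm * L i) * (n\<^sup>2 / 2)" by simp
    also have "\<dots> \<le> (1/2) * (n\<^sup>2 / 2)" using gm_L i by (intro mult_right_mono) auto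
    finally show ?thesis by simp
  qed
  have ccx: "cc i x = gi \<bullet> (z - u) + chi i z - chi i u" unfolding cc_def gi_def z_def u_def by simp
  have expand: "y \<bullet> (P - u) = gi \<bullet> (z - u) + gi \<bullet> \<rho> + d \<bullet> (z - u) + d \<bullet> \<rho>"
    unfolding ydef \<rho>_def by (simp add: inner_add_left inner_diff_right algebra_simps)
  have "gm * (cc i x + \<phi> (step x (i, e)) - \<phi> x)
      = gm * (gi \<bullet> (z - u) + chi i P - chi i u) + gm * (f (x + \<rho>) - f x)"
    unfolding ccx phis by (simp add: algebra_simps)
  also have "\<dots> \<le> gm * (gi \<bullet> (z - u) + chi i P - chi i u) + gm * (gi \<bullet> \<rho> + L i / 2 * n\<^sup>2)"
    using desc gm_pos by (intro add_left_mono mult_left_mono) auto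
  also have "\<dots> = gm * (y \<bullet> (P - u) + chi i P - chi i u) - gm * (d \<bullet> (z - u)) - gm * (d \<bullet> \<rho>) + gm * (L i / 2 * n\<^sup>2)"
    unfolding expand by (simp add: algebra_simps)
  also have "\<dots> \<le> Vb i x - bregman (w i) (gw i) P u - gm * (d \<bullet> (z - u)) + gm\<^sup>2 * dd\<^sup>2"
  proof -
    have "- gm * (d \<bullet> \<rho>) \<le> gm * (dd * n)" using mult_left_mono[OF dl, of gm] gm_pos by simp
    then show ?thesis using vi bl am gL by simp
  qed
  finally show ?thesis unfolding d_def dd_def z_def u_def P_def by simp
qed

definition "Mst = (measure_pmf (pmf_of_set {1..b}) \<Otimes>\<^sub>M D)"
definition "stepc x ie = (if fst ie \<in> {1..b} \<and> x \<in> X then step x ie else x)"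
definition "H i p = fst p - blkproj blk i (fst p)
   + prox (Xb i) (w i) (gw i) (chi i) (blkproj blk i (fst p)) (blkproj blk i (snd p)) gm"
definition "Hc i p = (if p \<in> X \<times> UNIV then H i p else fst p)"

lemma H_cont: "i \<in> {1..b} \<Longrightarrow> continuous_on (X \<times> UNIV) (H i)"
proof -
  assume i: "i \<in> {1..b}"
  have c1: "continuous_on (X \<times> UNIV) (\<lambda>p::(real^'n)\<times>(real^'n). (blkproj blk i (fst p), blkproj blk i (snd p)))"
    by (intro continuous_intros)
  have c2: "continuous_on (Xb i \<times> UNIV) (\<lambda>q. prox (Xb i) (w i) (gw i) (chi i) (fst q) (snd q) gm)"
    by (rule proxblk.prox_cont[OF pb[OF i] gm_pos])
  have img: "(\<lambda>p::(real^'n)\<times>(real^'n). (blkproj blk i (fst p), blkproj blk i (snd p))) ` (X \<times> UNIV) \<subseteq> Xb i \<times> UNIV"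
    using X_blk i by auto
  have "continuous_on (X \<times> UNIV) (\<lambda>p. prox (Xb i) (w i) (gw i) (chi i) (blkproj blk i (fst p)) (blkproj blk i (snd p)) gm)"
    using continuous_on_compose2[OF c2 c1 img] by simp
  then show ?thesis unfolding H_def
    by (intro continuous_intros) auto
qed

lemma Hc_meas: "i \<in> {1..b} \<Longrightarrow> Hc i \<in> borel_measurable borel"
  unfolding Hc_def
  by (intro borel_measurable_continuous_on_if H_cont continuous_intros closed_Times X_closed closed_UNIV
        borel_closed)

lemma stepc_eq: "stepc x (i, e) = (if i \<in> {1..b} then Hc i (x, G x e) else x)"
  unfolding stepc_def Hc_def H_def step_eq by auto

lemma stepc_meas: "(\<lambda>p. stepc (fst p) (snd p)) \<in> borel_measurable (borel \<Otimes>\<^sub>M Mst)"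
proof -
  have Gm: "(\<lambda>p. G (fst p) (snd (snd p))) \<in> borel_measurable (borel \<Otimes>\<^sub>M Mst)"
  proof -
    have "(\<lambda>p. (fst p, snd (snd p))) \<in> measurable (borel \<Otimes>\<^sub>M Mst) (borel \<Otimes>\<^sub>M D)"
      unfolding Mst_def by measurable
    from measurable_compose[OF this G_meas] show ?thesis by (simp add: case_prod_beta)
  qed
  have pairm: "(\<lambda>p. (fst p, G (fst p) (snd (snd p)))) \<in> borel_measurable (borel \<Otimes>\<^sub>M Mst)"
  proof -
    have "(\<lambda>p. (fst p, G (fst p) (snd (snd p)))) \<in> measurable (borel \<Otimes>\<^sub>M Mst) (borel \<Otimes>\<^sub>M borel)"
      using Gm by (intro measurable_Pair) auto
    then show ?thesis by (simp add: borel_prod)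
  qed
  define F where "F = (\<lambda>(i::nat) (p::(real^'n) \<times> nat \<times> 'e). if i \<in> {1..b} then Hc i (fst p, G (fst p) (snd (snd p))) else (fst p :: real^'n))"
  have Fm: "F i \<in> borel_measurable (borel \<Otimes>\<^sub>M Mst)" for i
  proof (cases "i \<in> {1..b}")
    case True
    then show ?thesis unfolding F_def using measurable_compose[OF pairm Hc_meas[OF True]] by simp
  next
    case False
    then have "F i = fst" unfolding F_def by (auto simp: fun_eq_iff)
    then show ?thesis by simp
  qed
  have im: "(\<lambda>p. fst (snd p)) \<in> measurable (borel \<Otimes>\<^sub>M Mst) (count_space UNIV)"
  proof -
    have "(\<lambda>p. fst (snd p)) \<in> measurable (borel \<Otimes>\<^sub>M Mst) (measure_pmf (pmf_of_set {1..b}))"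
      unfolding Mst_def by measurable
    then show ?thesis using sets_measure_pmf_count_space measurable_cong_sets by blast
  qed
  have "(\<lambda>p. F (fst (snd p)) p) \<in> borel_measurable (borel \<Otimes>\<^sub>M Mst)"
    by (rule measurable_compose_countable[OF Fm im])
  moreover have "(\<lambda>p. F (fst (snd p)) p) = (\<lambda>p. stepc (fst p) (snd p))"
    by (auto simp: F_def stepc_eq fun_eq_iff split: prod.splits)
  ultimately show ?thesis by simp
qed

lemma phi_cont: "continuous_on X \<phi>"
proof -
  have "continuous_on X (\<lambda>x. chi i (blkproj blk i x))" if i: "i \<in> {1..b}" for i
  proof -
    have "continuous_on (blkspace blk i) (chi i)"
      using chi_convex i by (intro convex_on_blk_continuous) auto
    then show ?thesis
      by (rule continuous_on_compose2[OF _ continuous_blkproj]) (auto simp: blkproj_in)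
  qed
  then show ?thesis unfolding phi_def by (intro continuous_intros f_cont) auto
qed

lemma W_cont: "continuous_on X W"
proof -
  have "continuous_on X (Vb i)" if i: "i \<in> {1..b}" for i
  proof -
    interpret proxblk blk i "nrm i" "Xb i" "w i" "gw i" "chi i" by (rule pb[OF i])
    have img: "blkproj blk i ` X \<subseteq> Xb i" using X_blk i by auto
    have c1: "continuous_on X (\<lambda>x. w i (blkproj blk i x))"
      by (rule continuous_on_compose2[OF w_cont continuous_blkproj img])
    have c2: "continuous_on X (\<lambda>x. gw i (blkproj blk i x))"
      by (rule continuous_on_compose2[OF w_C1 continuous_blkproj img])
    show ?thesis unfolding Vb_def bregman_def
      by (intro continuous_intros c1 c2)
  qed
  then show ?thesis unfolding W_def by (intro continuous_intros) auto
qed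

definition "\<Phi>c x = (if x \<in> X then \<Phi> x else 0)"

lemma \<Phi>c_meas: "\<Phi>c \<in> borel_measurable borel"
  unfolding \<Phi>c_def \<Phi>_def
  by (intro borel_measurable_continuous_on_if borel_closed X_closed continuous_intros phi_cont W_cont)

definition "ac x = (if x \<in> X then \<phi> x - \<phi> xstar else 0)"

lemma ac_meas: "ac \<in> borel_measurable borel"
  unfolding ac_def
  by (intro borel_measurable_continuous_on_if borel_closed X_closed continuous_intros phi_cont)

lemma Vb_nonneg: "x \<in> X \<Longrightarrow> i \<in> {1..b} \<Longrightarrow> 0 \<le> Vb i x"
  unfolding Vb_def using proxblk.bregman_nonneg[OF pb] X_blk xstar_in by blast

lemma W_nonneg: "x \<in> X \<Longrightarrow> 0 \<le> W x"
  unfolding W_def by (intro sum_nonneg Vb_nonneg)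

lemma a_nonneg: "x \<in> X \<Longrightarrow> 0 \<le> \<phi> x - \<phi> xstar"
  using xstar_opt by auto

lemma \<Phi>_nonneg: "x \<in> X \<Longrightarrow> 0 \<le> \<Phi> x"
  unfolding \<Phi>_def using W_nonneg a_nonneg gm_pos by simp

lemma stepc_X: "x \<in> X \<Longrightarrow> stepc x ie \<in> X"
  unfolding stepc_def using step_X by (cases ie) auto

lemma cc_sum: "x \<in> X \<Longrightarrow> \<phi> x - \<phi> xstar \<le> (\<Sum>i=1..b. cc i x)"
proof -
  assume x: "x \<in> X"
  have "(\<Sum>i=1..b. cc i x) = g x \<bullet> (x - xstar) + (\<Sum>i=1..b. chi i (blkproj blk i x)) - (\<Sum>i=1..b. chi i (blkproj blk i xstar))"
    unfolding cc_def inner_blk_sum[OF blk_range, of "g x" "x - xstar"]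
    by (simp add: sum.distrib sum_subtractf blkproj_diff)
  moreover have "f x + g x \<bullet> (xstar - x) \<le> f xstar" by (rule f_grad_ineq[OF x xstar_in])
  moreover have "g x \<bullet> (xstar - x) = - (g x \<bullet> (x - xstar))" by (simp add: inner_diff_right)
  ultimately show ?thesis unfolding phi_def by simp
qed

lemma \<Phi>_step:
  assumes x: "x \<in> X" and i: "i \<in> {1..b}"
  shows "\<Phi> (step x (i, e)) \<le> \<Phi> x - real b * gm * cc i x
     - real b * gm * (del i x e \<bullet> (blkproj blk i x - blkproj blk i xstar))
     + real b * gm\<^sup>2 * (dual_norm (blkspace blk i) (nrm i) (del i x e))\<^sup>2"
proof -
  have "real b * (gm * (cc i x + \<phi> (step x (i, e)) - \<phi> x))
     \<le> real b * (Vb i x - bregman (w i) (gw i) (Pr i x e) (blkproj blk i xstar)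
        - gm * (del i x e \<bullet> (blkproj blk i x - blkproj blk i xstar))
        + gm\<^sup>2 * (dual_norm (blkspace blk i) (nrm i) (del i x e))\<^sup>2)"
    by (intro mult_left_mono per_sample[OF x i]) auto
  then show ?thesis unfolding \<Phi>_def W_step[OF i] by (simp add: algebra_simps)
qed

lemma one_block:
  assumes x: "x \<in> X" and i: "i \<in> {1..b}"
  shows "(\<integral>\<^sup>+e. ennreal (\<Phi> (step x (i, e))) \<partial>D)
     \<le> ennreal (\<Phi> x - real b * gm * cc i x + real b * gm\<^sup>2 * (\<sigma>b i)\<^sup>2)
     \<and> 0 \<le> \<Phi> x - real b * gm * cc i x + real b * gm\<^sup>2 * (\<sigma>b i)\<^sup>2"
proof -
  interpret D: prob_space D by (rule D_prob)
  interpret nrmblk blk i "nrm i" using pb[OF i] by (simp add: proxblk_def)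
  define v where "v = blkproj blk i x - blkproj blk i xstar"
  have vb: "v \<in> blkspace blk i" unfolding v_def by (intro blkspace_diff blkproj_in)
  define R where "R = (\<lambda>e. \<Phi> x - real b * gm * cc i x - real b * gm * (del i x e \<bullet> v)
     + real b * gm\<^sup>2 * (dn (del i x e))\<^sup>2)"
  have Gx: "integrable D (G x)" "(\<integral>e. G x e \<partial>D) = g x" using G_unbiased x by auto
  have Gxm: "G x \<in> borel_measurable D"
  proof -
    have "(\<lambda>e. (x, e)) \<in> measurable D (borel \<Otimes>\<^sub>M D)" by measurable
    from measurable_compose[OF this G_meas] show ?thesis by simp
  qed
  have delv: "del i x e \<bullet> v = G x e \<bullet> v - g x \<bullet> v" for e
    unfolding del_def using blkproj_inner[OF vb] by (simp add: inner_diff_left)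
  have dm: "(\<lambda>e. (dn (del i x e))\<^sup>2) \<in> borel_measurable D"
    unfolding del_def
    by (intro borel_measurable_power measurable_compose[OF _ dn_measurable] borel_measurable_diff
        measurable_compose[OF Gxm] borel_measurable_continuous_onI continuous_blkproj) simp
  have dfin: "(\<integral>\<^sup>+e. ennreal ((dn (del i x e))\<^sup>2) \<partial>D) \<le> ennreal ((\<sigma>b i)\<^sup>2)"
    using G_var i x unfolding del_def by auto
  have dint: "integrable D (\<lambda>e. (dn (del i x e))\<^sup>2)"
    using dfin by (intro integrableI_nonneg dm) (auto simp: top_unique order_le_less_trans)
  have dle: "(\<integral>e. (dn (del i x e))\<^sup>2 \<partial>D) \<le> (\<sigma>b i)\<^sup>2"
  proof -
    have "(\<integral>e. (dn (del i x e))\<^sup>2 \<partial>D) = enn2real (\<integral>\<^sup>+e. ennreal ((dn (del i x e))\<^sup>2) \<partial>D)"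
      by (rule integral_eq_nn_integral[OF dm]) auto
    also have "\<dots> \<le> (\<sigma>b i)\<^sup>2" by (rule enn2real_leI[OF _ dfin]) simp
    finally show ?thesis .
  qed
  have Rint: "integrable D R"
    unfolding R_def delv using Gx dint
    by (intro Bochner_Integration.integrable_add Bochner_Integration.integrable_diff
        integrable_mult_right D.integrable_const integrable_inner_left) auto
  have Rval: "(\<integral>e. R e \<partial>D) = \<Phi> x - real b * gm * cc i x + real b * gm\<^sup>2 * (\<integral>e. (dn (del i x e))\<^sup>2 \<partial>D)"
  proof -
    have i1: "integrable D (\<lambda>e. G x e \<bullet> v)" using Gx by auto
    have "(\<integral>e. del i x e \<bullet> v \<partial>D) = 0"
      unfolding delv using Gx i1 by (simp add: D.prob_space)
    then show ?thesis unfolding R_def using Gx dint i1 delv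
      by (simp add: D.prob_space)
  qed
  have stepR: "\<Phi> (step x (i, e)) \<le> R e" for e
    using \<Phi>_step[OF x i, of e] unfolding R_def v_def by simp
  have Rnn: "0 \<le> R e" for e using stepR[of e] \<Phi>_nonneg[OF step_X[OF x i, of e]] by linarith
  have "(\<integral>\<^sup>+e. ennreal (\<Phi> (step x (i, e))) \<partial>D) \<le> (\<integral>\<^sup>+e. ennreal (R e) \<partial>D)"
    by (intro nn_integral_mono ennreal_leI stepR)
  also have "\<dots> = ennreal (\<integral>e. R e \<partial>D)"
    by (rule nn_integral_eq_integral[OF Rint]) (simp add: Rnn)
  also have "\<dots> \<le> ennreal (\<Phi> x - real b * gm * cc i x + real b * gm\<^sup>2 * (\<sigma>b i)\<^sup>2)"
    unfolding Rval using dle gm_pos by (intro ennreal_leI add_left_mono mult_left_mono) auto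
  finally have 1: "(\<integral>\<^sup>+e. ennreal (\<Phi> (step x (i, e))) \<partial>D)
     \<le> ennreal (\<Phi> x - real b * gm * cc i x + real b * gm\<^sup>2 * (\<sigma>b i)\<^sup>2)" .
  have "0 \<le> (\<integral>e. R e \<partial>D)" using Rnn by (simp add: integral_nonneg)
  also have "\<dots> \<le> \<Phi> x - real b * gm * cc i x + real b * gm\<^sup>2 * (\<sigma>b i)\<^sup>2"
    unfolding Rval using dle gm_pos by (intro add_left_mono mult_left_mono) auto
  finally show ?thesis using 1 by simp
qed


definition "sig2 = (\<Sum>i=1..b. (\<sigma>b i)\<^sup>2)"

lemma one_step:
  assumes x: "x \<in> X"
  shows "(\<integral>\<^sup>+ie. ennreal (\<Phi> (stepc x ie)) \<partial>Mst)
     \<le> ennreal (\<Phi> x - gm * (\<phi> x - \<phi> xstar) + gm\<^sup>2 * sig2)"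
proof -
  interpret D: prob_space D by (rule D_prob)
  have fin: "finite {1..b}" and ne: "{1..b} \<noteq> {}" using b_pos by auto
  have meas: "(\<lambda>ie. ennreal (\<Phi>c (stepc x ie))) \<in> borel_measurable Mst"
  proof -
    have "(\<lambda>ie. (x, ie)) \<in> measurable Mst (borel \<Otimes>\<^sub>M Mst)" by measurable
    from measurable_compose[OF this stepc_meas] have "(\<lambda>ie. stepc x ie) \<in> borel_measurable Mst" by simp
    from measurable_compose[OF this \<Phi>c_meas] show ?thesis by simp
  qed
  have eqc: "\<Phi> (stepc x ie) = \<Phi>c (stepc x ie)" for ie
    using stepc_X[OF x] unfolding \<Phi>c_def by simp
  define a where "a = (\<lambda>i. \<Phi> x - real b * gm * cc i x + real b * gm\<^sup>2 * (\<sigma>b i)\<^sup>2)"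
  have ob: "(\<integral>\<^sup>+e. ennreal (\<Phi>c (stepc x (i, e))) \<partial>D) \<le> ennreal (a i) \<and> 0 \<le> a i"
    if i: "i \<in> {1..b}" for i
  proof -
    have "\<Phi>c (stepc x (i, e)) = \<Phi> (step x (i, e))" for e
      using eqc[of "(i, e)"] i x unfolding stepc_def by simp
    then show ?thesis using one_block[OF x i] unfolding a_def by simp
  qed
  have "(\<integral>\<^sup>+ie. ennreal (\<Phi> (stepc x ie)) \<partial>Mst) = (\<integral>\<^sup>+ie. ennreal (\<Phi>c (stepc x ie)) \<partial>Mst)"
    by (simp add: eqc)
  also have "\<dots> = (\<integral>\<^sup>+i. \<integral>\<^sup>+e. ennreal (\<Phi>c (stepc x (i, e))) \<partial>D \<partial>measure_pmf (pmf_of_set {1..b}))"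
    using D.nn_integral_fst[OF meas[unfolded Mst_def]] unfolding Mst_def by simp
  also have "\<dots> = (\<Sum>i\<in>{1..b}. \<integral>\<^sup>+e. ennreal (\<Phi>c (stepc x (i, e))) \<partial>D) / of_nat (card {1..b})"
    by (rule nn_integral_pmf_of_set[OF ne fin])
  also have "\<dots> \<le> (\<Sum>i\<in>{1..b}. ennreal (a i)) / of_nat (card {1..b})"
    using ob by (intro divide_right_mono_ennreal sum_mono) auto
  also have "\<dots> = ennreal ((\<Sum>i\<in>{1..b}. a i) / real b)"
  proof -
    have "(\<Sum>i\<in>{1..b}. ennreal (a i)) = ennreal (\<Sum>i\<in>{1..b}. a i)"
      using ob by (intro sum_ennreal) auto
    moreover have "0 \<le> (\<Sum>i\<in>{1..b}. a i)" using ob by (intro sum_nonneg) auto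
    ultimately show ?thesis using b_pos by (simp add: ennreal_of_nat_eq_real_of_nat divide_ennreal)
  qed
  also have "\<dots> \<le> ennreal (\<Phi> x - gm * (\<phi> x - \<phi> xstar) + gm\<^sup>2 * sig2)"
  proof (rule ennreal_leI)
    have "(\<Sum>i\<in>{1..b}. a i) = real b * \<Phi> x - real b * gm * (\<Sum>i=1..b. cc i x) + real b * gm\<^sup>2 * sig2"
      unfolding a_def sig2_def by (simp add: sum.distrib sum_subtractf sum_distrib_left)
    then have "(\<Sum>i\<in>{1..b}. a i) / real b = \<Phi> x - gm * (\<Sum>i=1..b. cc i x) + gm\<^sup>2 * sig2"
      using b_pos by (simp add: field_simps)
    moreover have "gm * (\<phi> x - \<phi> xstar) \<le> gm * (\<Sum>i=1..b. cc i x)"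
      using cc_sum[OF x] gm_pos by (intro mult_left_mono) auto
    ultimately show "(\<Sum>i\<in>{1..b}. a i) / real b \<le> \<Phi> x - gm * (\<phi> x - \<phi> xstar) + gm\<^sup>2 * sig2"
      by simp
  qed
  finally show ?thesis .
qed


lemma Mst_prob: "prob_space Mst"
  unfolding Mst_def by (intro prob_space_pair prob_space_measure_pmf D_prob)

lemma stepPhi_meas: "(\<lambda>ie. ennreal (\<Phi> (stepc x ie))) \<in> borel_measurable Mst" if x: "x \<in> X"
proof -
  have "(\<lambda>ie. (x, ie)) \<in> measurable Mst (borel \<Otimes>\<^sub>M Mst)" by measurable
  from measurable_compose[OF this stepc_meas] have "(\<lambda>ie. stepc x ie) \<in> borel_measurable Mst" by simp
  from measurable_compose[OF this \<Phi>c_meas] have "(\<lambda>ie. ennreal (\<Phi>c (stepc x ie))) \<in> borel_measurable Mst" by simp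
  moreover have "\<Phi>c (stepc x ie) = \<Phi> (stepc x ie)" for ie using stepc_X[OF x] unfolding \<Phi>c_def by simp
  ultimately show ?thesis by simp
qed

primrec xc :: "(nat \<Rightarrow> nat \<times> 'e) \<Rightarrow> nat \<Rightarrow> real^'n" where
  "xc om 0 = x1"
| "xc om (Suc k) = (if k = 0 then x1 else stepc (xc om k) (om k))"

declare xc.simps[simp del]

lemma xc_X: "xc om k \<in> X"
  by (induction k) (auto simp: x1_in stepc_X xc.simps)

lemma xc_upd: "k \<le> j \<Longrightarrow> xc (om(j := y)) k = xc om k"
  by (induction k) (auto simp: xc.simps)

lemma xc_upd2: "xc (om(Suc n := y)) (Suc (Suc n)) = stepc (xc om (Suc n)) y"
  using xc_upd[of "Suc n" "Suc n" om y] by (simp add: xc.simps)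

lemma xc_meas: "k \<le> Suc n \<Longrightarrow> (\<lambda>om. xc om k) \<in> borel_measurable (PiM {1..n} (\<lambda>_. Mst))"
proof (induction k)
  case 0 then show ?case by (simp add: xc.simps)
next
  case (Suc k)
  show ?case
  proof (cases "k = 0")
    case True then show ?thesis by (simp add: xc.simps)
  next
    case False
    then have kin: "k \<in> {1..n}" using Suc.prems by auto
    have "(\<lambda>om. (xc om k, om k)) \<in> measurable (PiM {1..n} (\<lambda>_. Mst)) (borel \<Otimes>\<^sub>M Mst)"
      using Suc kin by (intro measurable_Pair measurable_component_singleton) auto
    from measurable_compose[OF this stepc_meas] show ?thesis using False by (simp add: xc.simps)
  qed
qed

definition "Z n om = ennreal (\<Phi> (xc om (Suc n)) + gm * (\<Sum>k=1..n. \<phi> (xc om k) - \<phi> xstar))"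

lemma Z_meas: "Z n \<in> borel_measurable (PiM {1..n} (\<lambda>_. Mst))"
proof -
  have "Z n = (\<lambda>om. ennreal (\<Phi>c (xc om (Suc n)) + gm * (\<Sum>k=1..n. ac (xc om k))))"
    unfolding Z_def \<Phi>c_def ac_def by (intro ext) (simp add: xc_X)
  moreover have "(\<lambda>om. ennreal (\<Phi>c (xc om (Suc n)) + gm * (\<Sum>k=1..n. ac (xc om k)))) \<in> borel_measurable (PiM {1..n} (\<lambda>_. Mst))"
    by (intro measurable_compose[OF _ measurable_ennreal] borel_measurable_add borel_measurable_times
        borel_measurable_sum measurable_compose[OF xc_meas \<Phi>c_meas] measurable_compose[OF xc_meas ac_meas]) auto
  ultimately show ?thesis by simp
qed

lemma iterate_bound:
  "(\<integral>\<^sup>+om. Z n om \<partial>PiM {1..n} (\<lambda>_. Mst)) \<le> ennreal (\<Phi> x1 + real n * gm\<^sup>2 * sig2)"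
proof (induction n)
  case 0
  interpret P: prob_space "PiM {} (\<lambda>_. Mst)" by (intro prob_space_PiM Mst_prob)
  have "Z 0 = (\<lambda>om. ennreal (\<Phi> x1))" unfolding Z_def by (auto simp: fun_eq_iff xc.simps)
  then show ?case by (simp add: P.emeasure_space_1)
next
  case (Suc n)
  interpret M: prob_space Mst by (rule Mst_prob)
  interpret PS: product_prob_space "\<lambda>_. Mst" UNIV using Mst_prob by unfold_locales
  have sig_nn: "0 \<le> gm\<^sup>2 * sig2" unfolding sig2_def by (simp add: sum_nonneg)
  have ins: "{1..Suc n} = insert (Suc n) {1..n}" by auto
  have "(\<integral>\<^sup>+om. Z (Suc n) om \<partial>PiM {1..Suc n} (\<lambda>_. Mst))
      = (\<integral>\<^sup>+om. (\<integral>\<^sup>+y. Z (Suc n) (om(Suc n := y)) \<partial>Mst) \<partial>PiM {1..n} (\<lambda>_. Mst))"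
    using Z_meas[of "Suc n"] unfolding ins by (intro PS.product_nn_integral_insert) auto
  also have "\<dots> \<le> (\<integral>\<^sup>+om. Z n om + ennreal (gm\<^sup>2 * sig2) \<partial>PiM {1..n} (\<lambda>_. Mst))"
  proof (rule nn_integral_mono)
    fix om
    define C where "C = gm * (\<Sum>k=1..Suc n. \<phi> (xc om k) - \<phi> xstar)"
    have Cnn: "0 \<le> C" unfolding C_def using gm_pos a_nonneg[OF xc_X] by (intro mult_nonneg_nonneg sum_nonneg) auto
    have sum_eq: "(\<Sum>k=1..Suc n. \<phi> (xc (om(Suc n := y)) k) - \<phi> xstar) = (\<Sum>k=1..Suc n. \<phi> (xc om k) - \<phi> xstar)" for y
      by (intro sum.cong) (auto simp: xc_upd)
    have "(\<integral>\<^sup>+y. Z (Suc n) (om(Suc n := y)) \<partial>Mst) = (\<integral>\<^sup>+y. ennreal (\<Phi> (stepc (xc om (Suc n)) y)) + ennreal C \<partial>Mst)"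
      unfolding Z_def xc_upd2 sum_eq C_def[symmetric]
      using \<Phi>_nonneg[OF stepc_X[OF xc_X]] Cnn by (intro nn_integral_cong) simp
    also have "\<dots> = (\<integral>\<^sup>+y. ennreal (\<Phi> (stepc (xc om (Suc n)) y)) \<partial>Mst) + ennreal C"
      by (subst nn_integral_add) (auto intro: stepPhi_meas[OF xc_X] simp: M.emeasure_space_1)
    also have "\<dots> \<le> ennreal (\<Phi> (xc om (Suc n)) - gm * (\<phi> (xc om (Suc n)) - \<phi> xstar) + gm\<^sup>2 * sig2) + ennreal C"
      by (intro add_right_mono one_step xc_X)
    also have "\<dots> = Z n om + ennreal (gm\<^sup>2 * sig2)"
    proof -
      have e1: "0 \<le> \<Phi> (xc om (Suc n)) - gm * (\<phi> (xc om (Suc n)) - \<phi> xstar)"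
      proof -
        have "gm * (\<phi> (xc om (Suc n)) - \<phi> xstar) \<le> real b * gm * (\<phi> (xc om (Suc n)) - \<phi> xstar)"
          using b_pos gm_pos a_nonneg[OF xc_X] by (intro mult_right_mono) auto
        moreover have "0 \<le> real b * W (xc om (Suc n))" using W_nonneg[OF xc_X] by simp
        ultimately show ?thesis unfolding \<Phi>_def by linarith
      qed
      have "C = gm * (\<Sum>k=1..n. \<phi> (xc om k) - \<phi> xstar) + gm * (\<phi> (xc om (Suc n)) - \<phi> xstar)"
        unfolding C_def by (simp add: algebra_simps)
      then have "\<Phi> (xc om (Suc n)) - gm * (\<phi> (xc om (Suc n)) - \<phi> xstar) + gm\<^sup>2 * sig2 + C
          = (\<Phi> (xc om (Suc n)) + gm * (\<Sum>k=1..n. \<phi> (xc om k) - \<phi> xstar)) + gm\<^sup>2 * sig2" by simp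
      moreover have "0 \<le> \<Phi> (xc om (Suc n)) + gm * (\<Sum>k=1..n. \<phi> (xc om k) - \<phi> xstar)"
        using \<Phi>_nonneg[OF xc_X] gm_pos a_nonneg[OF xc_X] by (intro add_nonneg_nonneg mult_nonneg_nonneg sum_nonneg) auto
      ultimately show ?thesis unfolding Z_def
        using e1 sig_nn Cnn by (simp del: ennreal_plus add: ennreal_plus[symmetric])
    qed
    finally show "(\<integral>\<^sup>+y. Z (Suc n) (om(Suc n := y)) \<partial>Mst) \<le> Z n om + ennreal (gm\<^sup>2 * sig2)" .
  qed
  also have "\<dots> = (\<integral>\<^sup>+om. Z n om \<partial>PiM {1..n} (\<lambda>_. Mst)) + ennreal (gm\<^sup>2 * sig2)"
  proof -
    interpret P: prob_space "PiM {1..n} (\<lambda>_. Mst)" by (intro prob_space_PiM Mst_prob)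
    show ?thesis using Z_meas[of n] P.emeasure_space_1 by (subst nn_integral_add) auto
  qed
  also have "\<dots> \<le> ennreal (\<Phi> x1 + real n * gm\<^sup>2 * sig2) + ennreal (gm\<^sup>2 * sig2)"
    by (intro add_right_mono Suc.IH)
  also have "\<dots> = ennreal (\<Phi> x1 + real (Suc n) * gm\<^sup>2 * sig2)"
    using \<Phi>_nonneg[OF x1_in] sig_nn by (simp del: ennreal_plus add: ennreal_plus[symmetric] algebra_simps)
  finally show ?case .
qed


lemma blkproj_sum: "blkproj blk i (\<Sum>k\<in>K. c k *\<^sub>R y k) = (\<Sum>k\<in>K. c k *\<^sub>R blkproj blk i (y k))"
  by (induction K rule: infinite_finite_induct) (auto simp: blkproj_add blkproj_scale blkproj_def vec_eq_iff)

lemma phi_jensen: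
  assumes K: "finite K" "K \<noteq> {}" and c: "(\<Sum>k\<in>K. c k) = 1" "\<And>k. k \<in> K \<Longrightarrow> 0 \<le> c k"
    and y: "\<And>k. k \<in> K \<Longrightarrow> y k \<in> X"
  shows "\<phi> (\<Sum>k\<in>K. c k *\<^sub>R y k) \<le> (\<Sum>k\<in>K. c k * \<phi> (y k))"
proof -
  have f: "f (\<Sum>k\<in>K. c k *\<^sub>R y k) \<le> (\<Sum>k\<in>K. c k * f (y k))"
    by (rule convex_on_sum[OF K f_convex c y])
  have ch: "chi i (blkproj blk i (\<Sum>k\<in>K. c k *\<^sub>R y k)) \<le> (\<Sum>k\<in>K. c k * chi i (blkproj blk i (y k)))"
    if i: "i \<in> {1..b}" for i
    unfolding blkproj_sum using chi_convex i
    by (intro convex_on_sum[OF K _ c]) (auto simp: blkproj_in)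
  have "\<phi> (\<Sum>k\<in>K. c k *\<^sub>R y k) \<le> (\<Sum>k\<in>K. c k * f (y k)) + (\<Sum>i=1..b. \<Sum>k\<in>K. c k * chi i (blkproj blk i (y k)))"
    unfolding phi_def using f ch by (intro add_mono sum_mono) auto
  also have "\<dots> = (\<Sum>k\<in>K. c k * \<phi> (y k))"
  proof -
    have "(\<Sum>i=1..b. \<Sum>k\<in>K. c k * chi i (blkproj blk i (y k))) = (\<Sum>k\<in>K. \<Sum>i=1..b. c k * chi i (blkproj blk i (y k)))"
      by (rule sum.swap)
    then show ?thesis unfolding phi_def by (simp add: sum_distrib_left distrib_left sum.distrib)
  qed
  finally show ?thesis .
qed

definition "avgc n om = (\<Sum>k=2..n+1. (1 / real n) *\<^sub>R xc om k)"

lemma avgc_X: "1 \<le> n \<Longrightarrow> avgc n om \<in> X"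
  unfolding avgc_def by (intro convex_sum X_convex xc_X) auto

lemma avgc_meas: "(\<lambda>om. avgc n om) \<in> borel_measurable (PiM {1..n} (\<lambda>_. Mst))"
  unfolding avgc_def by (intro borel_measurable_sum borel_measurable_scaleR borel_measurable_const xc_meas) auto

lemma final_bound:
  assumes n: "1 \<le> n"
  shows "(\<integral>\<^sup>+om. ennreal (\<phi> (avgc n om) - \<phi> xstar) \<partial>PiM {1..n} (\<lambda>_. Mst))
    \<le> ennreal (((real b - 1) * gm * (\<phi> x1 - \<phi> xstar) + real b * W x1 + real n * gm\<^sup>2 * sig2) / (real n * gm))"
proof -
  let ?P = "PiM {1..n} (\<lambda>_. Mst)"
  interpret P: prob_space ?P by (intro prob_space_PiM Mst_prob)
  define a where "a = (\<lambda>x. \<phi> x - \<phi> xstar)"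
  define I where "I = (\<integral>\<^sup>+om. ennreal (a (avgc n om)) \<partial>?P)"
  have a1: "0 \<le> a x1" unfolding a_def using a_nonneg[OF x1_in] .
  have am: "(\<lambda>om. ennreal (a (avgc n om))) \<in> borel_measurable ?P"
  proof -
    have "(\<lambda>om. ennreal (ac (avgc n om))) \<in> borel_measurable ?P"
      by (intro measurable_compose[OF _ measurable_ennreal] measurable_compose[OF avgc_meas ac_meas])
    moreover have "ac (avgc n om) = a (avgc n om)" for om using avgc_X[OF n] unfolding ac_def a_def by simp
    ultimately show ?thesis by simp
  qed
  have pw: "ennreal (real n * gm) * ennreal (a (avgc n om)) + ennreal (gm * a x1) \<le> Z n om" for om
  proof -
    have jen: "a (avgc n om) \<le> (\<Sum>k=2..n+1. (1 / real n) * a (xc om k))"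
    proof -
      have "\<phi> (avgc n om) \<le> (\<Sum>k=2..n+1. (1 / real n) * \<phi> (xc om k))"
        unfolding avgc_def using n by (intro phi_jensen xc_X) auto
      moreover have "(\<Sum>k=2..n+1. (1 / real n) * a (xc om k)) = (\<Sum>k=2..n+1. (1 / real n) * \<phi> (xc om k)) - \<phi> xstar"
        unfolding a_def using n by (simp add: sum_subtractf right_diff_distrib sum_distrib_left[symmetric])
      ultimately show ?thesis unfolding a_def by simp
    qed
    have "real n * gm * a (avgc n om) \<le> real n * gm * (\<Sum>k=2..n+1. (1 / real n) * a (xc om k))"
      using jen gm_pos by (intro mult_left_mono) auto
    also have "\<dots> = gm * (\<Sum>k=2..n+1. a (xc om k))"
    proof -
      have "real n * (\<Sum>k=2..n+1. (1 / real n) * a (xc om k)) = (\<Sum>k=2..n+1. a (xc om k))"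
        using n by (simp add: sum_distrib_left del: sum.cl_ivl_Suc)
      then show ?thesis by (metis mult.assoc mult.commute)
    qed
    also have "(\<Sum>k=2..n+1. a (xc om k)) = (\<Sum>k=1..n. a (xc om k)) - a x1 + a (xc om (Suc n))"
    proof -
      have "(\<Sum>k=1..n+1. a (xc om k)) = a (xc om 1) + (\<Sum>k=2..n+1. a (xc om k))"
        by (subst sum.atLeast_Suc_atMost) (auto simp: numeral_2_eq_2)
      moreover have "(\<Sum>k=1..n+1. a (xc om k)) = (\<Sum>k=1..n. a (xc om k)) + a (xc om (Suc n))"
        by simp
      moreover have "xc om 1 = x1" by (simp add: xc.simps)
      ultimately show ?thesis by simp
    qed
    finally have A: "real n * gm * a (avgc n om) + gm * a x1 \<le> gm * (\<Sum>k=1..n. a (xc om k)) + gm * a (xc om (Suc n))"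
      by (simp add: algebra_simps)
    have B: "gm * a (xc om (Suc n)) \<le> \<Phi> (xc om (Suc n))"
    proof -
      have "gm * a (xc om (Suc n)) \<le> real b * gm * a (xc om (Suc n))"
        using b_pos gm_pos a_nonneg[OF xc_X] unfolding a_def by (intro mult_right_mono) auto
      moreover have "0 \<le> real b * W (xc om (Suc n))" using W_nonneg[OF xc_X] by simp
      ultimately show ?thesis unfolding \<Phi>_def a_def by linarith
    qed
    have nn1: "0 \<le> real n * gm * a (avgc n om)"
      using gm_pos a_nonneg[OF avgc_X[OF n]] unfolding a_def by simp
    have "ennreal (real n * gm) * ennreal (a (avgc n om)) + ennreal (gm * a x1)
        = ennreal (real n * gm * a (avgc n om) + gm * a x1)"
    proof -
      have an: "0 \<le> a (avgc n om)" using a_nonneg[OF avgc_X[OF n]] unfolding a_def .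
      have "ennreal (real n * gm) * ennreal (a (avgc n om)) = ennreal (real n * gm * a (avgc n om))"
        using an gm_pos by (simp add: ennreal_mult)
      moreover have "ennreal (real n * gm * a (avgc n om) + gm * a x1) = ennreal (real n * gm * a (avgc n om)) + ennreal (gm * a x1)"
        using nn1 a1 gm_pos by (intro ennreal_plus) auto
      ultimately show ?thesis by simp
    qed
    also have "\<dots> \<le> Z n om"
      unfolding Z_def using A B unfolding a_def by (intro ennreal_leI) simp
    finally show ?thesis .
  qed
  have "ennreal (real n * gm) * I + ennreal (gm * a x1) = (\<integral>\<^sup>+om. ennreal (real n * gm) * ennreal (a (avgc n om)) + ennreal (gm * a x1) \<partial>?P)"
    unfolding I_def using am P.emeasure_space_1 by (simp add: nn_integral_add nn_integral_cmult)
  also have "\<dots> \<le> (\<integral>\<^sup>+om. Z n om \<partial>?P)" by (intro nn_integral_mono pw)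
  also have "\<dots> \<le> ennreal (\<Phi> x1 + real n * gm\<^sup>2 * sig2)" by (rule iterate_bound)
  finally have main: "ennreal (real n * gm) * I + ennreal (gm * a x1) \<le> ennreal (\<Phi> x1 + real n * gm\<^sup>2 * sig2)" .
  have npos: "0 < real n * gm" using n gm_pos by simp
  have "I \<noteq> \<top>"
  proof
    assume "I = \<top>"
    then have "ennreal (real n * gm) * I = \<top>" using npos n gm_pos by (simp add: ennreal_mult_top)
    then show False using main by (simp add: top_unique)
  qed
  then obtain r where r: "I = ennreal r" "0 \<le> r" by (cases I) auto
  have "ennreal (real n * gm * r + gm * a x1) \<le> ennreal (\<Phi> x1 + real n * gm\<^sup>2 * sig2)"
    using main r npos a1 gm_pos by (simp add: ennreal_mult[symmetric] del: ennreal_plus add: ennreal_plus[symmetric])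
  then have "real n * gm * r + gm * a x1 \<le> \<Phi> x1 + real n * gm\<^sup>2 * sig2"
    using \<Phi>_nonneg[OF x1_in] sig2_def by (subst (asm) ennreal_le_iff) (auto intro!: add_nonneg_nonneg mult_nonneg_nonneg sum_nonneg)
  then have "real n * gm * r \<le> (real b - 1) * gm * a x1 + real b * W x1 + real n * gm\<^sup>2 * sig2"
    unfolding \<Phi>_def a_def by (simp add: algebra_simps)
  then have "r \<le> ((real b - 1) * gm * a x1 + real b * W x1 + real n * gm\<^sup>2 * sig2) / (real n * gm)"
    using npos by (simp add: le_divide_eq mult.commute)
  then have "I \<le> ennreal (((real b - 1) * gm * a x1 + real b * W x1 + real n * gm\<^sup>2 * sig2) / (real n * gm))"
    unfolding r(1) a_def by (rule ennreal_leI)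
  then show ?thesis unfolding I_def a_def .
qed

end




theorem corollary3p2:
  fixes b N :: nat
    and blk :: "'n::finite \<Rightarrow> nat"
    and Xb :: "nat \<Rightarrow> (real^'n) set"
    and nrm :: "nat \<Rightarrow> real^'n \<Rightarrow> real"
    and f :: "real^'n \<Rightarrow> real" and g :: "real^'n \<Rightarrow> real^'n"
    and D :: "'e measure"
    and F :: "real^'n \<Rightarrow> 'e \<Rightarrow> real" and G :: "real^'n \<Rightarrow> 'e \<Rightarrow> real^'n"
    and L \<sigma>b :: "nat \<Rightarrow> real"
    and w :: "nat \<Rightarrow> real^'n \<Rightarrow> real" and gw :: "nat \<Rightarrow> real^'n \<Rightarrow> real^'n"
    and chi :: "nat \<Rightarrow> real^'n \<Rightarrow> real"
    and x1 xstar :: "real^'n" and Dt :: real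
  defines "X \<equiv> {x. \<forall>i\<in>{1..b}. blkproj blk i x \<in> Xb i}"
    and "\<phi> \<equiv> (\<lambda>x. f x + (\<Sum>i=1..b. chi i (blkproj blk i x)))"
    and "\<sigma> \<equiv> sqrt (\<Sum>i=1..b. (\<sigma>b i)\<^sup>2)"
    and "Lbar \<equiv> Max (L ` {1..b})"
    and "gam \<equiv> (\<lambda>k::nat. min (1 / (2 * Max (L ` {1..b})))
                 (Dt / sqrt (\<Sum>i=1..b. (\<sigma>b i)\<^sup>2) * sqrt (real b / real N)))"
    and "\<theta> \<equiv> (\<lambda>k::nat. if k \<le> 1 then 0
                 else real b * (min (1 / (2 * Max (L ` {1..b})))
                                 (Dt / sqrt (\<Sum>i=1..b. (\<sigma>b i)\<^sup>2) * sqrt (real b / real N)))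
                      - (real b - 1) * (min (1 / (2 * Max (L ` {1..b})))
                                 (Dt / sqrt (\<Sum>i=1..b. (\<sigma>b i)\<^sup>2) * sqrt (real b / real N))))"
    and "\<Omega> \<equiv> PiM {1..N} (\<lambda>_. measure_pmf (pmf_of_set {1..b}) \<Otimes>\<^sub>M D)"
  assumes b_pos: "1 \<le> b" and N_pos: "1 \<le> N"
    and blk_range: "\<forall>j. blk j \<in> {1..b}"
    and Xb: "\<forall>i\<in>{1..b}. Xb i \<noteq> {} \<and> closed (Xb i) \<and> convex (Xb i) \<and> Xb i \<subseteq> blkspace blk i"
    and nrm: "\<forall>i\<in>{1..b}. norm_on (blkspace blk i) (nrm i)"
    and f_convex: "convex_on X f"
    and f_grad: "\<forall>x\<in>X. (f has_derivative (\<lambda>h. g x \<bullet> h)) (at x within X)"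
    and L_pos: "\<forall>i\<in>{1..b}. 0 < L i"
    and g_Lip: "\<forall>i\<in>{1..b}. \<forall>x \<rho>. x \<in> X \<longrightarrow> \<rho> \<in> blkspace blk i \<longrightarrow> x + \<rho> \<in> X \<longrightarrow>
        dual_norm (blkspace blk i) (nrm i) (blkproj blk i (g (x + \<rho>)) - blkproj blk i (g x))
          \<le> L i * nrm i \<rho>"
    and chi_convex: "\<forall>i\<in>{1..b}. convex_on (blkspace blk i) (chi i)"
    and D_prob: "prob_space D"
    and F_mean: "\<forall>x\<in>X. integrable D (F x) \<and> f x = (\<integral>e. F x e \<partial>D)"
    and G_meas: "(\<lambda>(x, e). G x e) \<in> borel_measurable (borel \<Otimes>\<^sub>M D)"
    and G_unbiased: "\<forall>x\<in>X. integrable D (G x) \<and> (\<integral>e. G x e \<partial>D) = g x"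
    and G_var: "\<forall>i\<in>{1..b}. \<forall>x\<in>X.
        (\<integral>\<^sup>+e. ennreal ((dual_norm (blkspace blk i) (nrm i)
                     (blkproj blk i (G x e) - blkproj blk i (g x)))\<^sup>2) \<partial>D)
          \<le> ennreal ((\<sigma>b i)\<^sup>2)"
    and \<sigma>_pos: "\<sigma> > 0"
    and w_diff: "\<forall>i\<in>{1..b}. \<forall>z\<in>Xb i. (w i has_derivative (\<lambda>h. gw i z \<bullet> h)) (at z within Xb i)"
    and w_C1: "\<forall>i\<in>{1..b}. continuous_on (Xb i) (gw i)"
    and w_sc: "\<forall>i\<in>{1..b}. strongly_convex_wrt (Xb i) (nrm i) (w i)"
    and Dt_pos: "Dt > 0"
    and x1_in: "x1 \<in> X"
    and xstar_opt: "xstar \<in> X" "\<forall>x\<in>X. \<phi> xstar \<le> \<phi> x"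
  shows "(\<integral>om. \<phi> (sbmd_avg \<theta> (sbmd_x blk Xb w gw chi G gam x1 om) N) - \<phi> xstar \<partial>\<Omega>)
    \<le> (real b - 1) * (\<phi> x1 - \<phi> xstar) / real N
      + 2 * real b * Lbar * (\<Sum>i=1..b. bregman (w i) (gw i) (blkproj blk i x1) (blkproj blk i xstar)) / real N
      + \<sigma> * sqrt (real b) / sqrt (real N)
          * ((\<Sum>i=1..b. bregman (w i) (gw i) (blkproj blk i x1) (blkproj blk i xstar)) / Dt + Dt)"
proof -
  define gm where "gm = min (1 / (2 * Max (L ` {1..b})))
                 (Dt / sqrt (\<Sum>i=1..b. (\<sigma>b i)\<^sup>2) * sqrt (real b / real N))"
  have gam: "gam = (\<lambda>k. gm)" unfolding gam_def gm_def by simp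
  have th: "\<theta> k = (if k \<le> 1 then 0 else gm)" for k
  proof -
    have "real b * gm - (real b - 1) * gm = gm" by (simp add: algebra_simps)
    then show ?thesis unfolding \<theta>_def gm_def[symmetric] by simp
  qed
  have fin: "finite (L ` {1..b})" and ne: "L ` {1..b} \<noteq> {}" using b_pos by auto
  have Lbar_pos: "0 < Lbar"
  proof -
    have "L 1 \<le> Lbar" unfolding Lbar_def using fin b_pos by (intro Max_ge) auto
    then show ?thesis using L_pos b_pos by force
  qed
  have L_le: "L i \<le> Lbar" if "i \<in> {1..b}" for i unfolding Lbar_def using fin that by (intro Max_ge) auto
  define sig2 where "sig2 = (\<Sum>i=1..b. (\<sigma>b i)\<^sup>2)"
  have sig: "\<sigma> = sqrt sig2" unfolding \<sigma>_def sig2_def by simp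
  have sig2_pos: "0 < sig2" using \<sigma>_pos sig sig2_def by (auto intro: sum_nonneg)
  have sig2_eq: "sig2 = \<sigma>\<^sup>2" using sig sig2_pos by simp
  define q where "q = sqrt (real b) / sqrt (real N)"
  have q_pos: "0 < q" unfolding q_def using b_pos N_pos by simp
  have q2: "q\<^sup>2 = real b / real N" unfolding q_def using b_pos N_pos by (simp add: power_divide)
  have sq: "sqrt (real b / real N) = q" unfolding q_def by (simp add: real_sqrt_divide)
  define A where "A = 1 / (2 * Lbar)"
  define Bv where "Bv = Dt / \<sigma> * q"
  have gm_eq: "gm = min A Bv" unfolding gm_def A_def Bv_def Lbar_def \<sigma>_def sq by simp
  have A_pos: "0 < A" unfolding A_def using Lbar_pos by simp
  have Bv_pos: "0 < Bv" unfolding Bv_def using Dt_pos \<sigma>_pos q_pos by simp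
  have gm_pos: "0 < gm" using gm_eq A_pos Bv_pos by simp
  have gm_L: "\<forall>i\<in>{1..b}. gm * L i \<le> 1/2"
  proof
    fix i assume i: "i \<in> {1..b}"
    have Li: "0 \<le> L i" using L_pos i by (simp add: less_imp_le)
    have "gm * L i \<le> A * Lbar" using gm_eq L_le[OF i] Li gm_pos A_pos
      by (intro mult_mono) auto
    also have "\<dots> = 1/2" unfolding A_def using Lbar_pos by simp
    finally show "gm * L i \<le> 1/2" .
  qed
  interpret S: sbmd b blk Xb nrm f g D G L \<sigma>b w gw chi x1 xstar X \<phi> gm
    unfolding sbmd_def
    using b_pos blk_range Xb nrm f_convex f_grad g_Lip chi_convex D_prob G_meas G_unbiased G_var
      w_diff w_C1 w_sc x1_in xstar_opt gm_pos gm_L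
    by (simp add: X_def \<phi>_def)
  have Om: "\<Omega> = PiM {1..N} (\<lambda>_. S.Mst)" unfolding \<Omega>_def S.Mst_def ..
  interpret P: prob_space \<Omega> unfolding Om by (intro prob_space_PiM S.Mst_prob)
  interpret PP: pair_prob_space "measure_pmf (pmf_of_set {1..b})" D
    using D_prob by (simp add: pair_prob_space_def pair_sigma_finite_def prob_space_measure_pmf
      prob_space_imp_sigma_finite)
  have AEM: "AE y in S.Mst. fst y \<in> {1..b}"
    unfolding S.Mst_def
  proof (rule PP.AE_pair_measure)
    show "{x \<in> space (measure_pmf (pmf_of_set {1..b}) \<Otimes>\<^sub>M D). fst x \<in> {1..b}}
        \<in> sets (measure_pmf (pmf_of_set {1..b}) \<Otimes>\<^sub>M D)"
    proof -
      have "fst -` {1..b} \<inter> space (measure_pmf (pmf_of_set {1..b}) \<Otimes>\<^sub>M D) \<in> sets (measure_pmf (pmf_of_set {1..b}) \<Otimes>\<^sub>M D)"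
        by (rule measurable_sets[OF measurable_fst]) simp
      moreover have "{x \<in> space (measure_pmf (pmf_of_set {1..b}) \<Otimes>\<^sub>M D). fst x \<in> {1..b}}
          = fst -` {1..b} \<inter> space (measure_pmf (pmf_of_set {1..b}) \<Otimes>\<^sub>M D)" by auto
      ultimately show ?thesis by simp
    qed
    show "AE x in measure_pmf (pmf_of_set {1..b}). AE y in D. fst (x, y) \<in> {1..b}"
      using b_pos by (subst AE_measure_pmf_iff) (auto simp: set_pmf_of_set)
  qed
  have AEgood: "AE om in \<Omega>. \<forall>k\<in>{1..N}. fst (om k) \<in> {1..b}"
    unfolding Om
    by (intro AE_finite_allI AE_PiM_component[where P="\<lambda>y. fst y \<in> {1..b}"] S.Mst_prob AEM) auto
  have xeq: "k \<le> N + 1 \<Longrightarrow> sbmd_x blk Xb w gw chi G gam x1 om k = S.xc om k"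
    if good: "\<forall>k\<in>{1..N}. fst (om k) \<in> {1..b}" for om k
  proof (induction k)
    case 0 then show ?case by (simp add: S.xc.simps)
  next
    case (Suc k)
    show ?case
    proof (cases k)
      case 0 then show ?thesis by (simp add: S.xc.simps)
    next
      case (Suc k')
      have ih: "sbmd_x blk Xb w gw chi G gam x1 om (Suc k') = S.xc om (Suc k')"
        using Suc.IH Suc.prems Suc by simp
      have kk: "fst (om (Suc k')) \<in> {1..b}" using good Suc.prems Suc by auto
      have "sbmd_x blk Xb w gw chi G gam x1 om (Suc (Suc k')) = S.step (S.xc om (Suc k')) (om (Suc k'))"
        using ih unfolding gam S.step_def by simp
      also have "\<dots> = S.stepc (S.xc om (Suc k')) (om (Suc k'))"
        unfolding S.stepc_def using kk S.xc_X by simp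
      also have "\<dots> = S.xc om (Suc (Suc k'))" by (simp add: S.xc.simps)
      finally show ?thesis using Suc by simp
    qed
  qed
  have avg_eq: "sbmd_avg \<theta> (sbmd_x blk Xb w gw chi G gam x1 om) N = S.avgc N om"
    if good: "\<forall>k\<in>{1..N}. fst (om k) \<in> {1..b}" for om
  proof -
    have s1: "(\<Sum>k=2..N+1. \<theta> k) = real N * gm" using th by simp
    have "(\<Sum>k=2..N+1. \<theta> k *\<^sub>R sbmd_x blk Xb w gw chi G gam x1 om k) = (\<Sum>k=2..N+1. gm *\<^sub>R S.xc om k)"
      using th xeq[OF good] by (intro sum.cong) auto
    then have "sbmd_avg \<theta> (sbmd_x blk Xb w gw chi G gam x1 om) N
        = inverse (real N * gm) *\<^sub>R (\<Sum>k=2..N+1. gm *\<^sub>R S.xc om k)"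
      unfolding sbmd_avg_def s1 by simp
    also have "\<dots> = (\<Sum>k=2..N+1. (1 / real N) *\<^sub>R S.xc om k)"
    proof -
      have "inverse (real N) * inverse gm * gm = 1 / real N" using gm_pos by (simp add: field_simps)
      then show ?thesis by (simp add: scaleR_sum_right del: sum.cl_ivl_Suc)
    qed
    finally show ?thesis unfolding S.avgc_def .
  qed
  define \<psi> where "\<psi> = (\<lambda>om. \<phi> (sbmd_avg \<theta> (sbmd_x blk Xb w gw chi G gam x1 om) N) - \<phi> xstar)"
  have AEeq: "AE om in \<Omega>. \<psi> om = \<phi> (S.avgc N om) - \<phi> xstar"
    using AEgood by eventually_elim (simp add: \<psi>_def avg_eq)
  define W1 where "W1 = (\<Sum>i=1..b. bregman (w i) (gw i) (blkproj blk i x1) (blkproj blk i xstar))"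
  have W1: "S.W x1 = W1" unfolding S.W_def S.Vb_def W1_def ..
  have a1: "0 \<le> \<phi> x1 - \<phi> xstar" using xstar_opt x1_in by auto
  have W1nn: "0 \<le> W1" using S.W_nonneg[OF x1_in] W1 by simp
  define B where "B = ((real b - 1) * gm * (\<phi> x1 - \<phi> xstar) + real b * W1 + real N * gm\<^sup>2 * sig2) / (real N * gm)"
  have Bnn: "0 \<le> B" unfolding B_def using b_pos gm_pos N_pos a1 W1nn sig2_pos
    by (intro divide_nonneg_pos add_nonneg_nonneg mult_nonneg_nonneg) auto
  have nnb: "(\<integral>\<^sup>+om. ennreal (\<phi> (S.avgc N om) - \<phi> xstar) \<partial>\<Omega>) \<le> ennreal B"
    using S.final_bound[OF N_pos] unfolding Om B_def W1 S.sig2_def sig2_def .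
  have intle: "(\<integral>om. \<psi> om \<partial>\<Omega>) \<le> B"
  proof (cases "\<psi> \<in> borel_measurable \<Omega>")
    case True
    have nn: "AE om in \<Omega>. 0 \<le> \<psi> om"
      using AEeq by eventually_elim (use S.a_nonneg[OF S.avgc_X[OF N_pos]] in simp)
    have "(\<integral>om. \<psi> om \<partial>\<Omega>) = enn2real (\<integral>\<^sup>+om. ennreal (\<psi> om) \<partial>\<Omega>)"
      by (rule integral_eq_nn_integral[OF True nn])
    also have "(\<integral>\<^sup>+om. ennreal (\<psi> om) \<partial>\<Omega>) = (\<integral>\<^sup>+om. ennreal (\<phi> (S.avgc N om) - \<phi> xstar) \<partial>\<Omega>)"
      using AEeq by (intro nn_integral_cong_AE) auto
    finally show ?thesis using enn2real_leI[OF Bnn nnb] by simp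
  next
    case False
    then have "\<not> integrable \<Omega> \<psi>" using borel_measurable_integrable by blast
    then show ?thesis using Bnn by (simp add: not_integrable_integral_eq)
  qed
  have arith: "B \<le> (real b - 1) * (\<phi> x1 - \<phi> xstar) / real N
      + 2 * real b * Lbar * W1 / real N
      + \<sigma> * sqrt (real b) / sqrt (real N) * (W1 / Dt + Dt)"
  proof -
    have Nn: "0 < real N" using N_pos by simp
    have Bsplit: "B = (real b - 1) * (\<phi> x1 - \<phi> xstar) / real N + real b * W1 / (real N * gm) + gm * sig2"
      unfolding B_def using gm_pos Nn by (simp add: field_simps power2_eq_square)
    have t3: "gm * sig2 \<le> \<sigma> * q * Dt"
    proof -
      have "gm * sig2 \<le> Bv * sig2" using gm_eq sig2_pos by (intro mult_right_mono) auto
      also have "\<dots> = \<sigma> * q * Dt" unfolding Bv_def sig2_eq using \<sigma>_pos by (simp add: power2_eq_square)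
      finally show ?thesis .
    qed
    have inv: "1 / gm \<le> 2 * Lbar + \<sigma> / (Dt * q)"
    proof (cases "A \<le> Bv")
      case True
      then have "1 / gm = 2 * Lbar" using gm_eq unfolding A_def by simp
      then show ?thesis using \<sigma>_pos Dt_pos q_pos by simp
    next
      case False
      then have "1 / gm = \<sigma> / (Dt * q)" using gm_eq unfolding Bv_def by simp
      then show ?thesis using Lbar_pos by simp
    qed
    have "real b * W1 / (real N * gm) = (real b * W1 / real N) * (1 / gm)" by simp
    also have "\<dots> \<le> (real b * W1 / real N) * (2 * Lbar + \<sigma> / (Dt * q))"
      using inv W1nn Nn by (intro mult_left_mono) auto
    also have "\<dots> = 2 * real b * Lbar * W1 / real N + (real b / real N) * \<sigma> * W1 / (Dt * q)"
      using Nn q_pos Dt_pos by (simp add: field_simps)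
    also have "(real b / real N) * \<sigma> * W1 / (Dt * q) = \<sigma> * q * (W1 / Dt)"
    proof -
      have "(real b / real N) * \<sigma> * W1 / (Dt * q) = (q * q) * \<sigma> * W1 / (Dt * q)"
        using q2 by (simp add: power2_eq_square)
      also have "\<dots> = \<sigma> * q * (W1 / Dt)" using q_pos Dt_pos by simp
      finally show ?thesis .
    qed
    finally have t2: "real b * W1 / (real N * gm) \<le> 2 * real b * Lbar * W1 / real N + \<sigma> * q * (W1 / Dt)" .
    have "\<sigma> * sqrt (real b) / sqrt (real N) * (W1 / Dt + Dt) = \<sigma> * q * (W1 / Dt) + \<sigma> * q * Dt"
      unfolding q_def by (simp add: distrib_left)
    then show ?thesis using Bsplit t2 t3 by linarith
  qed
  show ?thesis using intle arith unfolding \<psi>_def W1_def by linarith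
qed


end
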